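(* Let $\epsilon\ge 0$ and $\delta\in(0,1)$. Let $f_{+,\epsilon}\in\arg\max_{f\in\mathcal{R}(\epsilon)}MR(f)$ and $f_{-,\epsilon}\in\arg\min_{f\in\mathcal{R}(\epsilon)}MR(f)$. Suppose $f_{+,\epsilon}$ and $f_{-,\epsilon}$ each satisfy the bounded individual loss, bounded relative loss and bounded aggregate loss assumptions (with constants $B_{\text{ind}},B_{\text{ref}},b_{\text{orig}},B_{\text{switch}}$). Then $$\mathbb{P}\left(MCR_+(\epsilon)>\widehat{MCR}_+(\epsilon_1)+\mathcal{Q}_1\right)\le\delta,\qquad \mathbb{P}\left(MCR_-(\epsilon)<\widehat{MCR}_-(\epsilon_1)-\mathcal{Q}_1\right)\le\delta,$$ where $\epsilon_1:=\epsilon+2B_{\text{ref}}\sqrt{\frac{\log(3\delta^{-1})}{2n}}$ and $$\mathcal{Q}_1:=\frac{B_{\text{switch}}}{b_{\text{orig}}}-\frac{B_{\text{switch}}-B_{\text{ind}}\sqrt{\frac{\log(6\delta^{-1})}{n}}}{b_{\text{orig}}+B_{\text{ind}}\sqrt{\frac{\log(6\delta^{-1})}{2n}}}.$$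
   Context: Let $Z=(Y,X_1,X_2)$ be a random variable on $\mathcal{Z}=\mathcal{Y}\times\mathcal{X}_1\times\mathcal{X}_2$, $\mathcal{X}=\mathcal{X}_1\times\mathcal{X}_2$. A model class $\mathcal{F}$ is a set of measurable functions $\mathcal{X}\to\mathcal{Y}$; $L:\mathcal{F}\times\mathcal{Z}\to\mathbb{R}_{\ge0}$ is a nonnegative loss. The data are $n\ge2$ i.i.d. copies $(y_i,x_{1,i},x_{2,i})$, $i=1,\dots,n$, of $Z$. Define $e_{\text{orig}}(f)=\mathbb{E}L(f,Z)$; $e_{\text{switch}}(f)=\mathbb{E}L(f,(Y^{(b)},X_1^{(a)},X_2^{(b)}))$ with $Z^{(a)},Z^{(b)}$ independent copies of $Z$; $MR(f)=e_{\text{switch}}(f)/e_{\text{orig}}(f)$. Empirically, $\hat e_{\text{orig}}(f)=\frac1n\sum_i L(f,(y_i,x_{1,i},x_{2,i}))$, $\hat e_{\text{switch}}(f)=\frac{1}{n(n-1)}\sum_i\sum_{j\neq i}L(f,(y_j,x_{1,i},x_{2,j}))$, $\widehat{MR}(f)=\hat e_{\text{switch}}(f)/\hat e_{\text{orig}}(f)$. A reference model $f_{\text{ref}}\in\mathcal{F}$ is fixed in advance (not data dependent). Rashomon sets: $\mathcal{R}(\epsilon)=\{f\in\mathcal{F}:e_{\text{orig}}(f)\le e_{\text{orig}}(f_{\text{ref}})+\epsilon\}$ and $\hat{\mathcal{R}}(\epsilon)=\{f_{\text{ref}}\}\cup\{f\in\mathcal{F}:\hat e_{\text{orig}}(f)\le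 \hat e_{\text{orig}}(f_{\text{ref}})+\epsilon\}$. Model class reliance: $MCR_+(\epsilon)=\max_{f\in\mathcal{R}(\epsilon)}MR(f)$, $MCR_-(\epsilon)=\min_{f\in\mathcal{R}(\epsilon)}MR(f)$, $\widehat{MCR}_+(\epsilon)=\max_{f\in\hat{\mathcal{R}}(\epsilon)}\widehat{MR}(f)$, $\widehat{MCR}_-(\epsilon)=\min_{f\in\hat{\mathcal{R}}(\epsilon)}\widehat{MR}(f)$. Standing assumption: all maxima/minima over these sets exist. Assumptions for a model $f$ (with known constants): bounded individual loss: $0\le L(f,z)\le B_{\text{ind}}$ for all $z\in\mathcal{Z}$; bounded relative loss: $|L(f,z)-L(f_{\text{ref}},z)|\le B_{\text{ref}}$ for all $z\in\mathcal{Z}$; bounded aggregate loss: $\mathbb{P}\{0<b_{\text{orig}}\le\hat e_{\text{orig}}(f)\}=\mathbb{P}\{\hat e_{\text{switch}}(f)\le B_{\text{switch}}\}=1$. *)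

theory Defs
  imports "HOL-Probability.Probability"
begin

definition switch_pt :: "'y \<times> 'x1 \<times> 'x2 \<Rightarrow> 'y \<times> 'x1 \<times> 'x2 \<Rightarrow> 'y \<times> 'x1 \<times> 'x2" where
  "switch_pt za zb = (fst zb, fst (snd za), snd (snd zb))"

definition e_orig :: "('y \<times> 'x1 \<times> 'x2) measure \<Rightarrow> ('f \<Rightarrow> 'y \<times> 'x1 \<times> 'x2 \<Rightarrow> real) \<Rightarrow> 'f \<Rightarrow> real" where
  "e_orig D L f = (\<integral>z. L f z \<partial>D)"

definition e_switch :: "('y \<times> 'x1 \<times> 'x2) measure \<Rightarrow> ('f \<Rightarrow> 'y \<times> 'x1 \<times> 'x2 \<Rightarrow> real) \<Rightarrow> 'f \<Rightarrow> real" where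
  "e_switch D L f = (\<integral>p. L f (switch_pt (fst p) (snd p)) \<partial>(D \<Otimes>\<^sub>M D))"

definition MR :: "('y \<times> 'x1 \<times> 'x2) measure \<Rightarrow> ('f \<Rightarrow> 'y \<times> 'x1 \<times> 'x2 \<Rightarrow> real) \<Rightarrow> 'f \<Rightarrow> real" where
  "MR D L f = e_switch D L f / e_orig D L f"

definition rashomon :: "'f set \<Rightarrow> ('y \<times> 'x1 \<times> 'x2) measure \<Rightarrow> ('f \<Rightarrow> 'y \<times> 'x1 \<times> 'x2 \<Rightarrow> real) \<Rightarrow> 'f \<Rightarrow> real \<Rightarrow> 'f set" where
  "rashomon F D L fref eps = {f \<in> F. e_orig D L f \<le> e_orig D L fref + eps}"

definition MCR_plus :: "'f set \<Rightarrow> ('y \<times> 'x1 \<times> 'x2) measure \<Rightarrow> ('f \<Rightarrow> 'y \<times> 'x1 \<times> 'x2 \<Rightarrow> real) \<Rightarrow> 'f \<Rightarrow> real \<Rightarrow> real" where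
  "MCR_plus F D L fref eps = (SUP f \<in> rashomon F D L fref eps. MR D L f)"

definition MCR_minus :: "'f set \<Rightarrow> ('y \<times> 'x1 \<times> 'x2) measure \<Rightarrow> ('f \<Rightarrow> 'y \<times> 'x1 \<times> 'x2 \<Rightarrow> real) \<Rightarrow> 'f \<Rightarrow> real \<Rightarrow> real" where
  "MCR_minus F D L fref eps = (INF f \<in> rashomon F D L fref eps. MR D L f)"

definition emp_orig :: "nat \<Rightarrow> ('f \<Rightarrow> 'y \<times> 'x1 \<times> 'x2 \<Rightarrow> real) \<Rightarrow> (nat \<Rightarrow> 'w \<Rightarrow> 'y \<times> 'x1 \<times> 'x2) \<Rightarrow> 'f \<Rightarrow> 'w \<Rightarrow> real" where
  "emp_orig n L Z f w = (\<Sum>i<n. L f (Z i w)) / real n"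

definition emp_switch :: "nat \<Rightarrow> ('f \<Rightarrow> 'y \<times> 'x1 \<times> 'x2 \<Rightarrow> real) \<Rightarrow> (nat \<Rightarrow> 'w \<Rightarrow> 'y \<times> 'x1 \<times> 'x2) \<Rightarrow> 'f \<Rightarrow> 'w \<Rightarrow> real" where
  "emp_switch n L Z f w =
     (\<Sum>i<n. \<Sum>j\<in>{..<n} - {i}. L f (switch_pt (Z i w) (Z j w))) / (real n * (real n - 1))"

definition emp_MR :: "nat \<Rightarrow> ('f \<Rightarrow> 'y \<times> 'x1 \<times> 'x2 \<Rightarrow> real) \<Rightarrow> (nat \<Rightarrow> 'w \<Rightarrow> 'y \<times> 'x1 \<times> 'x2) \<Rightarrow> 'f \<Rightarrow> 'w \<Rightarrow> real" where
  "emp_MR n L Z f w = emp_switch n L Z f w / emp_orig n L Z f w"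

definition emp_rashomon :: "'f set \<Rightarrow> nat \<Rightarrow> ('f \<Rightarrow> 'y \<times> 'x1 \<times> 'x2 \<Rightarrow> real) \<Rightarrow> (nat \<Rightarrow> 'w \<Rightarrow> 'y \<times> 'x1 \<times> 'x2) \<Rightarrow> 'f \<Rightarrow> real \<Rightarrow> 'w \<Rightarrow> 'f set" where
  "emp_rashomon F n L Z fref eps w =
     insert fref {f \<in> F. emp_orig n L Z f w \<le> emp_orig n L Z fref w + eps}"

definition emp_MCR_plus :: "'f set \<Rightarrow> nat \<Rightarrow> ('f \<Rightarrow> 'y \<times> 'x1 \<times> 'x2 \<Rightarrow> real) \<Rightarrow> (nat \<Rightarrow> 'w \<Rightarrow> 'y \<times> 'x1 \<times> 'x2) \<Rightarrow> 'f \<Rightarrow> real \<Rightarrow> 'w \<Rightarrow> real" where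
  "emp_MCR_plus F n L Z fref eps w = (SUP f \<in> emp_rashomon F n L Z fref eps w. emp_MR n L Z f w)"

definition emp_MCR_minus :: "'f set \<Rightarrow> nat \<Rightarrow> ('f \<Rightarrow> 'y \<times> 'x1 \<times> 'x2 \<Rightarrow> real) \<Rightarrow> (nat \<Rightarrow> 'w \<Rightarrow> 'y \<times> 'x1 \<times> 'x2) \<Rightarrow> 'f \<Rightarrow> real \<Rightarrow> 'w \<Rightarrow> real" where
  "emp_MCR_minus F n L Z fref eps w = (INF f \<in> emp_rashomon F n L Z fref eps w. emp_MR n L Z f w)"

end

theory Submission
  imports Defs
begin

lemma (in Hoeffding_ineq) Hoeffding_mgf:
  assumes l: "l > 0"
  shows "(\<integral>\<^sup>+x. ennreal (exp (l * ((\<Sum>i\<in>I. X i x) - \<mu>))) \<partial>M)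
           \<le> ennreal (exp (l\<^sup>2 * (\<Sum>i\<in>I. (b i - a i)\<^sup>2) / 8))"
proof -
  define \<mu>' where "\<mu>' = (\<lambda>i. expectation (X i))"
  have "(\<lambda>x. (\<Sum>i\<in>I. X i x) - \<mu>) = (\<lambda>x. (\<Sum>i\<in>I. X i x - \<mu>' i))"
    by (simp add: \<mu>_def sum_subtractf \<mu>'_def)
  then have "(\<integral>\<^sup>+x. ennreal (exp (l * ((\<Sum>i\<in>I. X i x) - \<mu>))) \<partial>M)
      = (\<integral>\<^sup>+x. ennreal (exp (l * ((\<Sum>i\<in>I. X i x - \<mu>' i)))) \<partial>M)"
    by (metis (no_types, lifting))
  also have "\<dots> = (\<integral>\<^sup>+x. (\<Prod>i\<in>I. ennreal (exp (l * (X i x - \<mu>' i)))) \<partial>M)"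
    by (intro nn_integral_cong)
       (simp_all add: sum_distrib_left ring_distribs exp_diff exp_sum fin prod_ennreal)
  also have "\<dots> = (\<Prod>i\<in>I. \<integral>\<^sup>+x. ennreal (exp (l * (X i x - \<mu>' i))) \<partial>M)"
    by (intro indep_vars_nn_integral fin indep_vars_compose2[OF indep]) auto
  also have "\<dots> \<le> (\<Prod>i\<in>I. ennreal (exp (l\<^sup>2 * (b i - a i)\<^sup>2 / 8)))"
  proof (intro prod_mono_ennreal)
    fix i assume i: "i \<in> I"
    from i interpret interval_bounded_random_variable M "X i" "a i" "b i" ..
    show "(\<integral>\<^sup>+x. ennreal (exp (l * (X i x - \<mu>' i))) \<partial>M) \<le> ennreal (exp (l\<^sup>2 * (b i - a i)\<^sup>2 / 8))"
      unfolding \<mu>'_def by (rule Hoeffdings_lemma_nn_integral) (use l in auto)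
  qed
  also have "\<dots> = ennreal (\<Prod>i\<in>I. exp (l\<^sup>2 * (b i - a i)\<^sup>2 / 8))"
    by (simp add: prod_ennreal prod_nonneg)
  also have "(\<Prod>i\<in>I. exp (l\<^sup>2 * (b i - a i)\<^sup>2 / 8)) = exp (l\<^sup>2 * (\<Sum>i\<in>I. (b i - a i)\<^sup>2) / 8)"
    by (simp add: exp_sum fin sum_distrib_left sum_divide_distrib)
  finally show ?thesis .
qed

lemma (in prob_space) avg_chernoff:
  fixes T :: "'i \<Rightarrow> 'a \<Rightarrow> real" and P :: "'i set" and c t :: real
  assumes P: "finite P" "P \<noteq> {}"
    and Tm: "\<And>p. p \<in> P \<Longrightarrow> T p \<in> borel_measurable M"
    and mgf: "\<And>p l. p \<in> P \<Longrightarrow> l > 0 \<Longrightarrow>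
               (\<integral>\<^sup>+x. ennreal (exp (l * T p x)) \<partial>M) \<le> ennreal (exp (l\<^sup>2 * c))"
    and c: "c > 0" and t: "t \<ge> 0"
  shows "prob {x\<in>space M. (\<Sum>p\<in>P. T p x) / card P \<ge> t} \<le> exp (- t\<^sup>2 / (4 * c))"
proof (cases "t = 0")
  case True
  then show ?thesis by simp
next
  case False
  with t have t: "t > 0" by simp
  define l where "l = t / (2 * c)"
  have l: "l > 0" using t c by (simp add: l_def)
  define N where "N = real (card P)"
  have N: "N > 0" using P by (simp add: N_def card_gt_0_iff)
  define U where "U = (\<lambda>x. (\<Sum>p\<in>P. T p x) / card P)"
  have Um[measurable]: "U \<in> borel_measurable M"
    unfolding U_def using Tm by (intro borel_measurable_divide borel_measurable_sum) auto
  have "ennreal (prob {x\<in>space M. U x \<ge> t}) = emeasure M {x\<in>space M. U x \<ge> t}"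
    by (simp add: emeasure_eq_measure)
  also have "\<dots> \<le> ennreal (exp (-l * t)) * (\<integral>\<^sup>+x. ennreal (exp (l * U x)) * indicator (space M) x \<partial>M)"
    by (intro Chernoff_ineq_nn_integral_ge l) auto
  also have "(\<integral>\<^sup>+x. ennreal (exp (l * U x)) * indicator (space M) x \<partial>M)
        = (\<integral>\<^sup>+x. ennreal (exp (l * U x)) \<partial>M)"
    by (intro nn_integral_cong) auto
  also have "\<dots> \<le> (\<integral>\<^sup>+x. (\<Sum>p\<in>P. ennreal ((1 / N) * exp (l * T p x))) \<partial>M)"
  proof (intro nn_integral_mono)
    fix x
    have "exp (l * U x) = exp (\<Sum>p\<in>P. (1 / N) *\<^sub>R (l * T p x))"
      unfolding U_def N_def by (simp add: sum_divide_distrib sum_distrib_left)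
    also have "\<dots> \<le> (\<Sum>p\<in>P. (1 / N) * exp (l * T p x))"
      by (rule convex_on_sum[OF P, where C=UNIV]) (use N in \<open>auto simp: N_def convex_on_exp[of 1, simplified]\<close>)
    finally show "ennreal (exp (l * U x)) \<le> (\<Sum>p\<in>P. ennreal ((1 / N) * exp (l * T p x)))"
      using N by (simp add: sum_ennreal ennreal_leI)
  qed
  also have "\<dots> = (\<Sum>p\<in>P. \<integral>\<^sup>+x. ennreal (1 / N) * ennreal (exp (l * T p x)) \<partial>M)"
    using Tm N by (subst nn_integral_sum) (auto simp: ennreal_mult[symmetric] intro!: sum.cong nn_integral_cong)
  also have "\<dots> = (\<Sum>p\<in>P. ennreal (1 / N) * \<integral>\<^sup>+x. ennreal (exp (l * T p x)) \<partial>M)"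
    using Tm by (intro sum.cong refl nn_integral_cmult) auto
  also have "\<dots> \<le> (\<Sum>p\<in>P. ennreal (1 / N) * ennreal (exp (l\<^sup>2 * c)))"
    by (intro sum_mono mult_left_mono mgf l) auto
  also have "\<dots> = ennreal (exp (l\<^sup>2 * c))"
  proof -
    have "(\<Sum>p\<in>P. ennreal (1 / N) * ennreal (exp (l\<^sup>2 * c))) = ennreal (\<Sum>p\<in>P. (1 / N) * exp (l\<^sup>2 * c))"
      using N by (subst sum_ennreal[symmetric]) (auto simp: ennreal_mult[symmetric])
    also have "(\<Sum>p\<in>P. (1 / N) * exp (l\<^sup>2 * c)) = exp (l\<^sup>2 * c)"
      using N by (simp add: N_def)
    finally show ?thesis .
  qed
  finally have "ennreal (prob {x\<in>space M. U x \<ge> t}) \<le> ennreal (exp (-l * t)) * ennreal (exp (l\<^sup>2 * c))"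
    by (simp add: mult_left_mono)
  also have "\<dots> = ennreal (exp (- t\<^sup>2 / (4 * c)))"
  proof -
    have "-l * t + l\<^sup>2 * c = - t\<^sup>2 / (4 * c)"
      using c by (simp add: l_def field_simps power2_eq_square)
    then show ?thesis by (simp flip: ennreal_mult exp_add)
  qed
  finally show ?thesis unfolding U_def by (subst (asm) ennreal_le_iff) auto
qed

lemma perm_pair_const:
  fixes H :: "nat \<Rightarrow> nat \<Rightarrow> real"
  assumes ab: "a < n" "b < n" "a \<noteq> b" and n: "2 \<le> n"
  shows "(\<Sum>\<sigma>\<in>{\<sigma>. \<sigma> permutes {..<n}}. H (\<sigma> a) (\<sigma> b))
       = (\<Sum>\<sigma>\<in>{\<sigma>. \<sigma> permutes {..<n}}. H (\<sigma> 0) (\<sigma> 1))"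
proof -
  define c where "c = Transposition.transpose 0 a b"
  define \<pi> where "\<pi> = Transposition.transpose 0 a \<circ> Transposition.transpose 1 c"
  have c: "c < n" using ab n by (auto simp: c_def Transposition.transpose_def)
  have c0: "c \<noteq> 0" using ab by (auto simp: c_def Transposition.transpose_def split: if_splits)
  have \<pi>: "\<pi> permutes {..<n}"
    unfolding \<pi>_def using ab n c by (intro permutes_compose permutes_swap_id) auto
  have \<pi>0: "\<pi> 0 = a" using c0 by (simp add: \<pi>_def Transposition.transpose_def)
  have \<pi>1: "\<pi> 1 = b" using ab by (auto simp: \<pi>_def c_def Transposition.transpose_def)
  show ?thesis
    using sum_permutations_compose_right[OF \<pi>, of "\<lambda>\<sigma>. H (\<sigma> 0) (\<sigma> 1)"] \<pi>0 \<pi>1 by simp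
qed

lemma perm_reindex_off:
  fixes H :: "nat \<Rightarrow> nat \<Rightarrow> real"
  assumes \<sigma>: "\<sigma> permutes {..<n}"
  shows "(\<Sum>p\<in>Sigma {..<n} (\<lambda>a. {..<n} - {a}). H (\<sigma> (fst p)) (\<sigma> (snd p)))
       = (\<Sum>p\<in>Sigma {..<n} (\<lambda>a. {..<n} - {a}). H (fst p) (snd p))"
proof -
  let ?S = "Sigma {..<n} (\<lambda>a. {..<n} - {a})"
  have bij: "bij_betw (\<lambda>p. (\<sigma> (fst p), \<sigma> (snd p))) ?S ?S"
  proof -
    have inj: "inj \<sigma>" using \<sigma> by (rule permutes_inj)
    have img: "\<sigma> ` {..<n} = {..<n}" using \<sigma> by (rule permutes_image)
    show ?thesis unfolding bij_betw_def
    proof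
      show "inj_on (\<lambda>p. (\<sigma> (fst p), \<sigma> (snd p))) ?S"
        unfolding inj_on_def by (metis inj injD prod.expand prod.inject)
      show "(\<lambda>p. (\<sigma> (fst p), \<sigma> (snd p))) ` ?S = ?S"
      proof
        show "(\<lambda>p. (\<sigma> (fst p), \<sigma> (snd p))) ` ?S \<subseteq> ?S"
        proof
          fix q assume "q \<in> (\<lambda>p. (\<sigma> (fst p), \<sigma> (snd p))) ` ?S"
          then obtain p where p: "p \<in> ?S" "q = (\<sigma> (fst p), \<sigma> (snd p))" by blast
          define a b where "a = fst p" and "b = snd p"
          have q: "q = (\<sigma> a, \<sigma> b)" "a < n" "b < n" "a \<noteq> b" using p by (auto simp: a_def b_def)
          have "\<sigma> a \<noteq> \<sigma> b" using q(4) inj by (metis injD)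
          moreover have "\<sigma> a < n" using permutes_in_image[OF \<sigma>, of a] q(2) by simp
          moreover have "\<sigma> b < n" using permutes_in_image[OF \<sigma>, of b] q(3) by simp
          ultimately show "q \<in> ?S" using q by simp
        qed
        show "?S \<subseteq> (\<lambda>p. (\<sigma> (fst p), \<sigma> (snd p))) ` ?S"
        proof
          fix p assume p: "p \<in> ?S"
          then obtain a b where p': "p = (a, b)" "a < n" "b < n" "a \<noteq> b" by auto
          obtain a' where a': "a' < n" "\<sigma> a' = a" using img p' by (metis imageE lessThan_iff)
          obtain b' where b': "b' < n" "\<sigma> b' = b" using img p' by (metis imageE lessThan_iff)
          have "a' \<noteq> b'" using a' b' p' by blast
          then have "(a', b') \<in> ?S" using a' b' by simp
          moreover have "p = (\<sigma> (fst (a', b')), \<sigma> (snd (a', b')))" using a' b' p' by simp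
          ultimately show "p \<in> (\<lambda>p. (\<sigma> (fst p), \<sigma> (snd p))) ` ?S"
            by (rule rev_image_eqI)
        qed
      qed
    qed
  qed
  show ?thesis
    using sum.reindex_bij_betw[OF bij, of "\<lambda>p. H (fst p) (snd p)"] by simp
qed

lemma card_off: "card (Sigma {..<n} (\<lambda>a. {..<n} - {a})) = n * (n - 1)"
proof -
  have "card (Sigma {..<n} (\<lambda>a. {..<n} - {a})) = (\<Sum>a<n. card ({..<n} - {a}))"
    by (rule card_SigmaI) auto
  also have "\<dots> = (\<Sum>a<n. n - 1)" by (intro sum.cong) auto
  finally show ?thesis by simp
qed

lemma perm_avg:
  fixes H :: "nat \<Rightarrow> nat \<Rightarrow> real" and n k :: nat
  assumes k: "k > 0" "2 * k \<le> n"
  shows "(\<Sum>\<sigma>\<in>{\<sigma>. \<sigma> permutes {..<n}}. (\<Sum>j<k. H (\<sigma> (2*j)) (\<sigma> (2*j+1))) / k)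
            / card {\<sigma>. \<sigma> permutes {..<n}}
       = (\<Sum>a<n. \<Sum>b\<in>{..<n} - {a}. H a b) / (real n * (real n - 1))"
proof -
  let ?P = "{\<sigma>. \<sigma> permutes {..<n}}"
  let ?S = "Sigma {..<n} (\<lambda>a. {..<n} - {a})"
  define C where "C = (\<Sum>\<sigma>\<in>?P. H (\<sigma> 0) (\<sigma> 1))"
  define G where "G = (\<Sum>p\<in>?S. H (fst p) (snd p))"
  define N where "N = real (card ?P)"
  have n: "n \<ge> 2" using k by simp
  have finP: "finite ?P" by (rule finite_permutations) simp
  have N: "N > 0" unfolding N_def using finP permutes_id[of "{..<n}"]
    by (metis (mono_tags, lifting) card_gt_0_iff empty_iff mem_Collect_eq of_nat_0_less_iff)
  have G: "(\<Sum>a<n. \<Sum>b\<in>{..<n} - {a}. H a b) = G"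
    unfolding G_def by (subst sum.Sigma) (auto simp: case_prod_unfold)
  have "(\<Sum>p\<in>?S. \<Sum>\<sigma>\<in>?P. H (\<sigma> (fst p)) (\<sigma> (snd p))) = (\<Sum>p\<in>?S. C)"
    unfolding C_def using n by (intro sum.cong refl perm_pair_const) auto
  also have "\<dots> = real (n * (n - 1)) * C" by (simp add: card_off)
  finally have e1: "(\<Sum>p\<in>?S. \<Sum>\<sigma>\<in>?P. H (\<sigma> (fst p)) (\<sigma> (snd p))) = real (n * (n - 1)) * C" .
  have "(\<Sum>p\<in>?S. \<Sum>\<sigma>\<in>?P. H (\<sigma> (fst p)) (\<sigma> (snd p)))
      = (\<Sum>\<sigma>\<in>?P. \<Sum>p\<in>?S. H (\<sigma> (fst p)) (\<sigma> (snd p)))" by (rule sum.swap)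
  also have "\<dots> = (\<Sum>\<sigma>\<in>?P. G)" unfolding G_def by (intro sum.cong refl perm_reindex_off) auto
  also have "\<dots> = N * G" by (simp add: N_def)
  finally have e2: "real (n * (n - 1)) * C = N * G" using e1 by simp
  have "(\<Sum>\<sigma>\<in>?P. (\<Sum>j<k. H (\<sigma> (2*j)) (\<sigma> (2*j+1))) / k)
      = (\<Sum>j<k. \<Sum>\<sigma>\<in>?P. H (\<sigma> (2*j)) (\<sigma> (2*j+1))) / k"
    by (simp add: sum_divide_distrib[symmetric] sum.swap[of _ ?P])
  also have "\<dots> = (\<Sum>j<k. C) / k"
    unfolding C_def using k by (intro arg_cong2[where f="(/)"] sum.cong refl perm_pair_const) auto
  also have "\<dots> = C" using k by simp
  finally have e3: "(\<Sum>\<sigma>\<in>?P. (\<Sum>j<k. H (\<sigma> (2*j)) (\<sigma> (2*j+1))) / k) = C" .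
  have nn: "real n * (real n - 1) = real (n * (n - 1))" using n by (simp add: of_nat_diff)
  have pos: "real (n * (n - 1)) > 0" using n by simp
  define r where "r = real (n * (n - 1))"
  have "C = N * G / r" using e2 pos unfolding r_def[symmetric] by (simp add: eq_divide_eq mult.commute)
  then show ?thesis
    unfolding e3 G nn N_def[symmetric] r_def[symmetric] using N by simp
qed

locale sample =
  fixes M :: "'w measure" and D :: "'z measure" and Z :: "nat \<Rightarrow> 'w \<Rightarrow> 'z" and n :: nat
  assumes M: "prob_space M" and D: "prob_space D" and n: "n \<ge> 2"
    and Zm: "\<forall>i<n. Z i \<in> measurable M D \<and> distr M D (Z i) = D"
    and indep: "prob_space.indep_vars M (\<lambda>_. D) Z {..<n}"
begin

sublocale prob_space M by (rule M)

lemma Zmeas[measurable]: "i < n \<Longrightarrow> Z i \<in> measurable M D"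
  using Zm by auto

lemma Zdistr: "i < n \<Longrightarrow> distr M D (Z i) = D"
  using Zm by auto

lemma single_integral:
  fixes g :: "'z \<Rightarrow> real"
  assumes g[measurable]: "g \<in> borel_measurable D" and i: "i < n"
  shows "integral\<^sup>L M (\<lambda>w. g (Z i w)) = integral\<^sup>L D g"
    and "integrable D g \<Longrightarrow> integrable M (\<lambda>w. g (Z i w))"
proof -
  show "integral\<^sup>L M (\<lambda>w. g (Z i w)) = integral\<^sup>L D g"
    using integral_distr[OF Zmeas[OF i] g] Zdistr[OF i] by simp
  show "integrable D g \<Longrightarrow> integrable M (\<lambda>w. g (Z i w))"
    using integrable_distr_eq[OF Zmeas[OF i] g] Zdistr[OF i] by simp
qed

lemma pair_indep:
  assumes ij: "i < n" "j < n" "i \<noteq> j"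
  shows "indep_var D (Z i) D (Z j)"
proof -
  have "indep_var (PiM {i} (\<lambda>_. D)) (\<lambda>\<omega>. restrict (\<lambda>i. Z i \<omega>) {i})
                  (PiM {j} (\<lambda>_. D)) (\<lambda>\<omega>. restrict (\<lambda>i. Z i \<omega>) {j})"
    using ij by (intro indep_var_restrict[OF indep]) auto
  then have "indep_var D ((\<lambda>f. f i) \<circ> (\<lambda>\<omega>. restrict (\<lambda>i. Z i \<omega>) {i}))
                       D ((\<lambda>f. f j) \<circ> (\<lambda>\<omega>. restrict (\<lambda>i. Z i \<omega>) {j}))"
    by (rule indep_var_compose) (auto intro: measurable_component_singleton)
  moreover have "(\<lambda>f. f i) \<circ> (\<lambda>\<omega>. restrict (\<lambda>i. Z i \<omega>) {i}) = Z i"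
    "(\<lambda>f. f j) \<circ> (\<lambda>\<omega>. restrict (\<lambda>i. Z i \<omega>) {j}) = Z j" by (auto simp: fun_eq_iff)
  ultimately show ?thesis by simp
qed

lemma pair_integral:
  fixes h :: "'z \<times> 'z \<Rightarrow> real"
  assumes h[measurable]: "h \<in> borel_measurable (D \<Otimes>\<^sub>M D)" and ij: "i < n" "j < n" "i \<noteq> j"
  shows "integral\<^sup>L M (\<lambda>w. h (Z i w, Z j w)) = integral\<^sup>L (D \<Otimes>\<^sub>M D) h"
    and "integrable (D \<Otimes>\<^sub>M D) h \<Longrightarrow> integrable M (\<lambda>w. h (Z i w, Z j w))"
proof -
  have "distr M D (Z i) \<Otimes>\<^sub>M distr M D (Z j) = distr M (D \<Otimes>\<^sub>M D) (\<lambda>x. (Z i x, Z j x))"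
    using pair_indep[OF ij] unfolding indep_var_distribution_eq by blast
  then have eq: "distr M (D \<Otimes>\<^sub>M D) (\<lambda>x. (Z i x, Z j x)) = D \<Otimes>\<^sub>M D"
    using Zdistr ij by simp
  have pm: "(\<lambda>x. (Z i x, Z j x)) \<in> measurable M (D \<Otimes>\<^sub>M D)" using ij by measurable
  show "integral\<^sup>L M (\<lambda>w. h (Z i w, Z j w)) = integral\<^sup>L (D \<Otimes>\<^sub>M D) h"
    using integral_distr[OF pm h] eq by simp
  show "integrable (D \<Otimes>\<^sub>M D) h \<Longrightarrow> integrable M (\<lambda>w. h (Z i w, Z j w))"
    using integrable_distr_eq[OF pm h] eq by simp
qed

lemma mean_hoeffding:
  fixes g :: "'z \<Rightarrow> real" and lo hi t :: real
  assumes g[measurable]: "g \<in> borel_measurable D" and bnd: "\<And>z. lo \<le> g z \<and> g z \<le> hi"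
    and lohi: "lo < hi" and t: "t \<ge> 0"
  shows "prob {w\<in>space M. (\<Sum>i<n. g (Z i w)) / n \<ge> integral\<^sup>L D g + t} \<le> exp (- 2 * real n * t\<^sup>2 / (hi - lo)\<^sup>2)"
    and "prob {w\<in>space M. (\<Sum>i<n. g (Z i w)) / n \<le> integral\<^sup>L D g - t} \<le> exp (- 2 * real n * t\<^sup>2 / (hi - lo)\<^sup>2)"
proof -
  have n0: "0 < n" using n by simp
  interpret H: Hoeffding_ineq_iid M "{..<n}" "\<lambda>i w. g (Z i w)" "\<lambda>w. g (Z 0 w)" lo hi
      "expectation (\<lambda>w. g (Z 0 w))"
  proof (unfold_locales)
    show "indep_vars (\<lambda>_. borel) (\<lambda>i w. g (Z i w)) {..<n}"
      by (rule indep_vars_compose2[OF indep]) simp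
    fix i assume "i \<in> {..<n}"
    then show "distr M borel (\<lambda>w. g (Z i w)) = distr M borel (\<lambda>w. g (Z 0 w))"
    proof -
      have "distr M borel (\<lambda>w. g (Z i w)) = distr D borel g" if "i < n" for i
        using distr_distr[of g D borel "Z i" M] that Zdistr[OF that] by (simp add: o_def)
      then show ?thesis using n0 \<open>i \<in> {..<n}\<close> by simp
    qed
  next
    show "random_variable borel (\<lambda>w. g (Z 0 w))" using n0 by measurable
  next
    show "AE x in M. g (Z 0 x) \<in> {lo..hi}" using bnd by simp
  qed simp_all
  have mu: "expectation (\<lambda>w. g (Z 0 w)) = integral\<^sup>L D g"
    using single_integral[OF g n0] by simp
  show "prob {w\<in>space M. (\<Sum>i<n. g (Z i w)) / n \<ge> integral\<^sup>L D g + t} \<le> exp (- 2 * real n * t\<^sup>2 / (hi - lo)\<^sup>2)"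
    using H.Hoeffding_ineq_ge'[OF t lohi] n0 unfolding mu by (simp add: lessThan_empty_iff)
  show "prob {w\<in>space M. (\<Sum>i<n. g (Z i w)) / n \<le> integral\<^sup>L D g - t} \<le> exp (- 2 * real n * t\<^sup>2 / (hi - lo)\<^sup>2)"
    using H.Hoeffding_ineq_le'[OF t lohi] n0 unfolding mu by (simp add: lessThan_empty_iff)
qed

end

context sample
begin

lemma ustat_upper:
  fixes h :: "'z \<times> 'z \<Rightarrow> real" and lo hi t :: real
  assumes h[measurable]: "h \<in> borel_measurable (D \<Otimes>\<^sub>M D)" and bnd: "\<And>p. lo \<le> h p \<and> h p \<le> hi"
    and lohi: "lo < hi" and t: "t \<ge> 0"
  shows "prob {w\<in>space M. (\<Sum>i<n. \<Sum>j\<in>{..<n} - {i}. h (Z i w, Z j w)) / (real n * (real n - 1))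
                 \<ge> integral\<^sup>L (D \<Otimes>\<^sub>M D) h + t}
         \<le> exp (- 2 * real (n div 2) * t\<^sup>2 / (hi - lo)\<^sup>2)"
proof -
  define k where "k = n div 2"
  have k: "k > 0" "2 * k \<le> n" using n by (auto simp: k_def)
  define x where "x = integral\<^sup>L (D \<Otimes>\<^sub>M D) h"
  define P where "P = {\<sigma>. \<sigma> permutes {..<n}}"
  have finP: "finite P" unfolding P_def by (rule finite_permutations) simp
  have neP: "P \<noteq> {}" unfolding P_def using permutes_id[of "{..<n}"] by blast
  define T where "T = (\<lambda>\<sigma> w. \<Sum>j<k. (h (Z (\<sigma> (2*j)) w, Z (\<sigma> (2*j+1)) w) - x) / k)"
  define c where "c = (hi - lo)\<^sup>2 / (8 * k)"
  have c: "c > 0" using lohi k by (simp add: c_def)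
  have inK: "\<sigma> (2*j) < n" "\<sigma> (2*j+1) < n" "\<sigma> (2*j) \<noteq> \<sigma> (2*j+1)"
    if "\<sigma> \<in> P" "j < k" for \<sigma> j
  proof -
    have s: "\<sigma> permutes {..<n}" using that P_def by simp
    show "\<sigma> (2*j) < n" using permutes_in_image[OF s, of "2*j"] that k by simp
    show "\<sigma> (2*j+1) < n" using permutes_in_image[OF s, of "2*j+1"] that k by simp
    show "\<sigma> (2*j) \<noteq> \<sigma> (2*j+1)" using permutes_inj[OF s] by (metis injD n_not_Suc_n add.commute plus_1_eq_Suc)
  qed
  have Tm: "T \<sigma> \<in> borel_measurable M" if "\<sigma> \<in> P" for \<sigma>
    unfolding T_def using inK[OF that] by measurable
  have mgf: "(\<integral>\<^sup>+w. ennreal (exp (l * T \<sigma> w)) \<partial>M) \<le> ennreal (exp (l\<^sup>2 * c))"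
    if \<sigma>: "\<sigma> \<in> P" and l: "l > 0" for \<sigma> l
  proof -
    define X where "X = (\<lambda>j w. h (Z (\<sigma> (2*j)) w, Z (\<sigma> (2*j+1)) w) / k)"
    define K where "K = (\<lambda>j. {\<sigma> (2*j), \<sigma> (2*j+1)})"
    have s: "\<sigma> permutes {..<n}" using \<sigma> P_def by simp
    have Ksub: "K j \<subseteq> {..<n}" if "j \<in> {..<k}" for j using inK[OF \<sigma>] that by (auto simp: K_def)
    have disj: "disjoint_family_on K {..<k}"
    unfolding disjoint_family_on_def
    proof (intro ballI impI)
      fix j j' assume "j \<in> {..<k}" "j' \<in> {..<k}" "j \<noteq> j'"
      then have "{2*j, 2*j+1} \<inter> {2*j', 2*j'+1} = {}" by auto
      then show "K j \<inter> K j' = {}" using permutes_inj[OF s] unfolding K_def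
        by (auto simp: inj_eq)
    qed
    have ind0: "indep_vars (\<lambda>j. PiM (K j) (\<lambda>_. D)) (\<lambda>j \<omega>. restrict (\<lambda>i. Z i \<omega>) (K j)) {..<k}"
      by (rule indep_vars_restrict[OF indep Ksub disj])
    have ind1: "indep_vars (\<lambda>_. borel)
        (\<lambda>j \<omega>. (\<lambda>f. h (f (\<sigma> (2*j)), f (\<sigma> (2*j+1))) / k) (restrict (\<lambda>i. Z i \<omega>) (K j))) {..<k}"
      by (rule indep_vars_compose2[OF ind0]) (auto simp: K_def)
    have indX: "indep_vars (\<lambda>_. borel) X {..<k}"
      using ind1 by (rule indep_vars_cong[THEN iffD1, rotated -1]) (auto simp: X_def K_def fun_eq_iff)
    interpret H: Hoeffding_ineq M "{..<k}" X "\<lambda>_. lo / k" "\<lambda>_. hi / k" "\<Sum>j<k. expectation (X j)"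
    proof unfold_locales
      fix j assume "j \<in> {..<k}"
      show "AE w in M. X j w \<in> {lo / k..hi / k}"
        using bnd k by (auto simp: X_def divide_right_mono)
    qed (use indX in auto)
    have EX: "expectation (X j) = x / k" if "j \<in> {..<k}" for j
    proof -
      have "expectation (X j) = expectation (\<lambda>w. h (Z (\<sigma> (2*j)) w, Z (\<sigma> (2*j+1)) w)) / k"
        unfolding X_def by simp
      also have "\<dots> = x / k" using pair_integral(1)[OF h inK[OF \<sigma>]] that by (simp add: x_def)
      finally show ?thesis .
    qed
    have mu: "(\<Sum>j<k. expectation (X j)) = x" using EX k by simp
    have TX: "T \<sigma> w = (\<Sum>j<k. X j w) - (\<Sum>j<k. expectation (X j))" for w
    proof -
      have "T \<sigma> w = (\<Sum>j<k. X j w) - x"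
        unfolding T_def X_def using k by (simp add: diff_divide_distrib sum_subtractf)
      then show ?thesis using mu by simp
    qed
    have "(\<integral>\<^sup>+w. ennreal (exp (l * T \<sigma> w)) \<partial>M)
        = (\<integral>\<^sup>+w. ennreal (exp (l * ((\<Sum>j<k. X j w) - (\<Sum>j<k. expectation (X j))))) \<partial>M)"
      by (simp add: TX)
    also have "\<dots> \<le> ennreal (exp (l\<^sup>2 * (\<Sum>j<k. (hi / k - lo / k)\<^sup>2) / 8))"
      by (rule H.Hoeffding_mgf[OF l])
    also have "l\<^sup>2 * (\<Sum>j<k. (hi / k - lo / k)\<^sup>2) / 8 = l\<^sup>2 * c"
      using k by (simp add: c_def power2_eq_square field_simps)
    finally show ?thesis .
  qed
  have avg: "prob {w\<in>space M. (\<Sum>\<sigma>\<in>P. T \<sigma> w) / card P \<ge> t} \<le> exp (- t\<^sup>2 / (4 * c))"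
    by (rule avg_chernoff[OF finP neP Tm mgf c t])
  have eqU: "(\<Sum>\<sigma>\<in>P. T \<sigma> w) / card P
        = (\<Sum>i<n. \<Sum>j\<in>{..<n} - {i}. h (Z i w, Z j w)) / (real n * (real n - 1)) - x" for w
  proof -
    define H where "H = (\<lambda>a b. h (Z a w, Z b w) - x)"
    have "(\<Sum>\<sigma>\<in>P. T \<sigma> w) = (\<Sum>\<sigma>\<in>P. (\<Sum>j<k. H (\<sigma> (2*j)) (\<sigma> (2*j+1))) / k)"
      unfolding T_def H_def by (simp add: sum_divide_distrib)
    then have "(\<Sum>\<sigma>\<in>P. T \<sigma> w) / card P = (\<Sum>a<n. \<Sum>b\<in>{..<n} - {a}. H a b) / (real n * (real n - 1))"
      using perm_avg[OF k, of H] unfolding P_def by simp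
    also have "(\<Sum>a<n. \<Sum>b\<in>{..<n} - {a}. H a b)
        = (\<Sum>a<n. \<Sum>b\<in>{..<n} - {a}. h (Z a w, Z b w)) - real n * (real n - 1) * x"
    proof -
      have "(\<Sum>a<n. \<Sum>b\<in>{..<n} - {a}. H a b)
          = (\<Sum>a<n. (\<Sum>b\<in>{..<n} - {a}. h (Z a w, Z b w)) - (real n - 1) * x)"
        unfolding H_def by (intro sum.cong refl) (simp add: sum_subtractf of_nat_diff)
      also have "\<dots> = (\<Sum>a<n. \<Sum>b\<in>{..<n} - {a}. h (Z a w, Z b w)) - real n * (real n - 1) * x"
        by (simp add: sum_subtractf)
      finally show ?thesis .
    qed
    finally show ?thesis using n by (simp add: diff_divide_distrib)
  qed
  have "{w\<in>space M. (\<Sum>i<n. \<Sum>j\<in>{..<n} - {i}. h (Z i w, Z j w)) / (real n * (real n - 1)) \<ge> x + t}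
      = {w\<in>space M. (\<Sum>\<sigma>\<in>P. T \<sigma> w) / card P \<ge> t}"
    by (auto simp: eqU)
  moreover have "- t\<^sup>2 / (4 * c) = - 2 * real (n div 2) * t\<^sup>2 / (hi - lo)\<^sup>2"
  proof -
    define W where "W = (hi - lo)\<^sup>2"
    have W: "W > 0" using lohi by (simp add: W_def)
    have "- t\<^sup>2 / (4 * (W / (8 * real k))) = - 2 * real k * t\<^sup>2 / W"
      using W k by (simp add: field_simps)
    then show ?thesis by (simp add: c_def W_def k_def)
  qed
  ultimately show ?thesis using avg by (simp add: x_def)
qed

end

lemma Q1_alt:
  fixes ob S a b :: real
  assumes "0 < ob" "0 \<le> b"
  shows "S/ob - (S - a)/(ob + b) = S * b / (ob * (ob + b)) + a / (ob + b)"
proof -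
  have p: "ob + b > 0" "ob > 0" using assms by auto
  have "S/ob - (S - a)/(ob + b) = (S * (ob + b) - (S - a) * ob) / (ob * (ob + b))"
    using p by (simp add: diff_frac_eq)
  also have "S * (ob + b) - (S - a) * ob = S * b + ob * a" by (simp add: algebra_simps)
  also have "(S * b + ob * a) / (ob * (ob + b)) = S * b / (ob * (ob + b)) + ob * a / (ob * (ob + b))"
    by (simp add: add_divide_distrib)
  also have "ob * a / (ob * (ob + b)) = a / (ob + b)" using p by simp
  finally show ?thesis .
qed

lemma alg_plus:
  fixes x y s so ob S a b :: real
  assumes ob: "0 < ob" "ob \<le> y" and x: "0 \<le> x" "x \<le> S" and ab: "0 \<le> a" "0 \<le> b"
    and s: "x - a \<le> s" "0 \<le> s" and so: "ob \<le> so" "so \<le> y + b"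
  shows "x / y \<le> s / so + (S/ob - (S - a)/(ob + b))"
proof -
  have y: "y > 0" using ob by simp
  have so0: "so > 0" using ob so by simp
  have s0: "s / so \<ge> 0" using s so0 by simp
  show ?thesis
  proof (cases "x \<le> a")
    case True
    have "x / y \<le> x / ob" using x ob by (intro divide_left_mono) auto
    also have "x / ob \<le> S/ob - (S - a)/(ob + b)"
    proof (cases "S \<ge> a")
      case True
      have "(S - a)/(ob + b) \<le> (S - a)/ob" using True ob ab by (intro divide_left_mono) auto
      moreover have "x / ob \<le> a / ob" using \<open>x \<le> a\<close> ob by (intro divide_right_mono) auto
      ultimately show ?thesis by (simp add: diff_divide_distrib)
    next
      case False
      have "(S - a)/(ob + b) \<le> 0" using False ob ab by (intro divide_nonpos_pos) auto
      moreover have "x / ob \<le> S / ob" using x ob by (intro divide_right_mono) auto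
      ultimately show ?thesis by linarith
    qed
    finally show ?thesis using s0 by linarith
  next
    case False
    have "(x - a) / (y + b) \<le> (x - a) / so" using False so so0 by (intro divide_left_mono) auto
    also have "\<dots> \<le> s / so" using s so0 by (intro divide_right_mono) auto
    finally have 1: "(x - a) / (y + b) \<le> s / so" .
    have 2: "x / y - (x - a) / (y + b) = x * b / (y * (y + b)) + a / (y + b)"
    proof -
      have p: "y + b > 0" "y > 0" using y ab by auto
      have "x / y - (x - a) / (y + b) = (x * (y + b) - (x - a) * y) / (y * (y + b))"
        using p by (simp add: diff_frac_eq)
      also have "x * (y + b) - (x - a) * y = x * b + y * a" by (simp add: algebra_simps)
      also have "(x * b + y * a) / (y * (y + b)) = x * b / (y * (y + b)) + y * a / (y * (y + b))"
        by (simp add: add_divide_distrib)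
      also have "y * a / (y * (y + b)) = a / (y + b)" using p by simp
      finally show ?thesis .
    qed
    have 3: "x * b / (y * (y + b)) \<le> S * b / (ob * (ob + b))"
    proof (rule frac_le)
      show "0 \<le> S * b" using x ab by simp
      show "x * b \<le> S * b" using x ab by (simp add: mult_right_mono)
      show "0 < ob * (ob + b)" using ob ab by simp
      show "ob * (ob + b) \<le> y * (y + b)" using ob ab by (intro mult_mono) auto
    qed
    have 4: "a / (y + b) \<le> a / (ob + b)" using ob ab by (intro divide_left_mono) auto
    show ?thesis using 1 2 3 4 Q1_alt[OF ob(1) ab(2), of S a] by linarith
  qed
qed

lemma alg_minus:
  fixes x y s so ob S a b :: real
  assumes ob: "0 < ob" "ob \<le> y" and x: "0 \<le> x" "x \<le> S" and ab: "0 \<le> a" "0 \<le> b"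
    and s: "s \<le> x + a" "s \<le> S" "0 \<le> s" and so: "ob \<le> so" "y - b \<le> so"
  shows "s / so \<le> x / y + (S/ob - (S - a)/(ob + b))"
proof -
  define m where "m = min S (x + a)"
  have m: "s \<le> m" "x \<le> m" "m \<le> S" "m \<le> x + a" using s x ab by (auto simp: m_def)
  have y: "y > 0" using ob by simp
  have so0: "so > 0" using ob so by simp
  have key: "s / so - x / y \<le> m / ob - x / (ob + b)"
  proof (cases "y \<le> ob + b")
    case True
    have "s / so \<le> m / so" using m so0 by (intro divide_right_mono) auto
    also have "\<dots> \<le> m / ob" using m so ob x by (intro divide_left_mono) auto
    finally have 1: "s / so \<le> m / ob" .
    have 2: "x / (ob + b) \<le> x / y" using True x ob by (intro divide_left_mono) auto
    show ?thesis using 1 2 by linarith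
  next
    case False
    have yb: "y - b > ob" using False by simp
    have "s / so \<le> m / so" using m so0 by (intro divide_right_mono) auto
    also have "\<dots> \<le> m / (y - b)" using m so ob x yb by (intro divide_left_mono) auto
    finally have 1: "s / so \<le> m / (y - b)" .
    have e1: "m / ob - m / (y - b) = m * ((y - b - ob) / (ob * (y - b)))" using ob yb by (simp add: field_simps)
    have e2: "x / (ob + b) - x / y = x * ((y - b - ob) / ((ob + b) * y))" using ob ab y by (simp add: field_simps)
    have f: "(y - b - ob) / ((ob + b) * y) \<le> (y - b - ob) / (ob * (y - b))"
    proof (rule divide_left_mono)
      show "ob * (y - b) \<le> (ob + b) * y" using ob ab y yb by (simp add: algebra_simps)
      show "0 \<le> y - b - ob" using yb by simp
      show "0 < (ob + b) * y * (ob * (y - b))" using ob ab y yb by simp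
    qed
    have "x * ((y - b - ob) / ((ob + b) * y)) \<le> m * ((y - b - ob) / (ob * (y - b)))"
    proof -
      have nn: "0 \<le> (y - b - ob) / ((ob + b) * y)" using yb ab y ob by (intro divide_nonneg_pos) auto
      show ?thesis by (rule mult_mono[OF m(2) f]) (use nn x m in auto)
    qed
    then show ?thesis using 1 e1 e2 by linarith
  qed
  have fin: "m / ob - x / (ob + b) \<le> S/ob - (S - a)/(ob + b)"
  proof (cases "m = S")
    case True
    have "(S - a) / (ob + b) \<le> x / (ob + b)" using True m ob ab by (intro divide_right_mono) auto
    then show ?thesis using True by simp
  next
    case False
    then have mx: "m = x + a" "x + a < S" using m by (auto simp: m_def)
    have "(S - x - a) / (ob + b) \<le> (S - x - a) / ob" using mx ob ab by (intro divide_left_mono) auto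
    then show ?thesis using mx ob ab by (simp add: diff_divide_distrib add_divide_distrib)
  qed
  show ?thesis using key fin by linarith
qed

context sample
begin

lemma ustat_lower:
  fixes h :: "'z \<times> 'z \<Rightarrow> real" and lo hi t :: real
  assumes h[measurable]: "h \<in> borel_measurable (D \<Otimes>\<^sub>M D)" and bnd: "\<And>p. lo \<le> h p \<and> h p \<le> hi"
    and lohi: "lo < hi" and t: "t \<ge> 0"
  shows "prob {w\<in>space M. (\<Sum>i<n. \<Sum>j\<in>{..<n} - {i}. h (Z i w, Z j w)) / (real n * (real n - 1))
                 \<le> integral\<^sup>L (D \<Otimes>\<^sub>M D) h - t}
         \<le> exp (- 2 * real (n div 2) * t\<^sup>2 / (hi - lo)\<^sup>2)"
proof -
  have m: "(\<lambda>p. - h p) \<in> borel_measurable (D \<Otimes>\<^sub>M D)" by measurable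
  have b: "\<And>p. - hi \<le> - h p \<and> - h p \<le> - lo" using bnd by auto
  have *: "prob {w\<in>space M. (\<Sum>i<n. \<Sum>j\<in>{..<n} - {i}. - h (Z i w, Z j w)) / (real n * (real n - 1))
                 \<ge> integral\<^sup>L (D \<Otimes>\<^sub>M D) (\<lambda>p. - h p) + t}
         \<le> exp (- 2 * real (n div 2) * t\<^sup>2 / (- lo - - hi)\<^sup>2)"
    using ustat_upper[OF m b _ t] lohi by simp
  have "{w\<in>space M. (\<Sum>i<n. \<Sum>j\<in>{..<n} - {i}. - h (Z i w, Z j w)) / (real n * (real n - 1))
                 \<ge> integral\<^sup>L (D \<Otimes>\<^sub>M D) (\<lambda>p. - h p) + t}
      = {w\<in>space M. (\<Sum>i<n. \<Sum>j\<in>{..<n} - {i}. h (Z i w, Z j w)) / (real n * (real n - 1))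
                 \<le> integral\<^sup>L (D \<Otimes>\<^sub>M D) h - t}"
    by (auto simp: sum_negf)
  moreover have "(- lo - - hi)\<^sup>2 = (hi - lo)\<^sup>2" by (simp add: power2_eq_square algebra_simps)
  ultimately show ?thesis using * by simp
qed

lemma mean_integral:
  fixes g :: "'z \<Rightarrow> real"
  assumes g[measurable]: "g \<in> borel_measurable D" and gi: "integrable D g"
  shows "integrable M (\<lambda>w. (\<Sum>i<n. g (Z i w)) / n)"
    and "integral\<^sup>L M (\<lambda>w. (\<Sum>i<n. g (Z i w)) / n) = integral\<^sup>L D g"
proof -
  have ii: "\<And>i. i \<in> {..<n} \<Longrightarrow> integrable M (\<lambda>w. g (Z i w))"
    using single_integral(2)[OF g _ gi] by simp
  show "integrable M (\<lambda>w. (\<Sum>i<n. g (Z i w)) / n)"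
    using ii by (intro integrable_divide Bochner_Integration.integrable_sum) auto
  have "integral\<^sup>L M (\<lambda>w. (\<Sum>i<n. g (Z i w)) / n) = (\<Sum>i<n. integral\<^sup>L M (\<lambda>w. g (Z i w))) / n"
    using ii by (simp add: Bochner_Integration.integral_sum)
  also have "\<dots> = (\<Sum>i<n. integral\<^sup>L D g) / n"
    using single_integral(1)[OF g] by simp
  also have "\<dots> = integral\<^sup>L D g" using n by simp
  finally show "integral\<^sup>L M (\<lambda>w. (\<Sum>i<n. g (Z i w)) / n) = integral\<^sup>L D g" .
qed

lemma ustat_integral:
  fixes h :: "'z \<times> 'z \<Rightarrow> real"
  assumes h[measurable]: "h \<in> borel_measurable (D \<Otimes>\<^sub>M D)" and hi: "integrable (D \<Otimes>\<^sub>M D) h"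
  shows "integrable M (\<lambda>w. (\<Sum>i<n. \<Sum>j\<in>{..<n} - {i}. h (Z i w, Z j w)) / (real n * (real n - 1)))"
    and "integral\<^sup>L M (\<lambda>w. (\<Sum>i<n. \<Sum>j\<in>{..<n} - {i}. h (Z i w, Z j w)) / (real n * (real n - 1)))
         = integral\<^sup>L (D \<Otimes>\<^sub>M D) h"
proof -
  have ii: "\<And>i j. i \<in> {..<n} \<Longrightarrow> j \<in> {..<n} - {i} \<Longrightarrow> integrable M (\<lambda>w. h (Z i w, Z j w))"
    using pair_integral(2)[OF h _ _ _ hi] by auto
  have i1: "\<And>i. i \<in> {..<n} \<Longrightarrow> integrable M (\<lambda>w. \<Sum>j\<in>{..<n} - {i}. h (Z i w, Z j w))"
    using ii by (intro Bochner_Integration.integrable_sum) auto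
  have i2: "integrable M (\<lambda>w. \<Sum>i<n. \<Sum>j\<in>{..<n} - {i}. h (Z i w, Z j w))"
    using Bochner_Integration.integrable_sum[of "{..<n}" M "\<lambda>i w. \<Sum>j\<in>{..<n} - {i}. h (Z i w, Z j w)"] i1 by simp
  then show "integrable M (\<lambda>w. (\<Sum>i<n. \<Sum>j\<in>{..<n} - {i}. h (Z i w, Z j w)) / (real n * (real n - 1)))"
    by (rule integrable_divide)
  have "integral\<^sup>L M (\<lambda>w. (\<Sum>i<n. \<Sum>j\<in>{..<n} - {i}. h (Z i w, Z j w)) / (real n * (real n - 1)))
      = (\<Sum>i<n. \<Sum>j\<in>{..<n} - {i}. integral\<^sup>L M (\<lambda>w. h (Z i w, Z j w))) / (real n * (real n - 1))"
  proof -
    have "integral\<^sup>L M (\<lambda>w. \<Sum>i<n. \<Sum>j\<in>{..<n} - {i}. h (Z i w, Z j w))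
        = (\<Sum>i<n. integral\<^sup>L M (\<lambda>w. \<Sum>j\<in>{..<n} - {i}. h (Z i w, Z j w)))"
      using Bochner_Integration.integral_sum[of "{..<n}" M "\<lambda>i w. \<Sum>j\<in>{..<n} - {i}. h (Z i w, Z j w)"] i1 by simp
    also have "\<dots> = (\<Sum>i<n. \<Sum>j\<in>{..<n} - {i}. integral\<^sup>L M (\<lambda>w. h (Z i w, Z j w)))"
      by (intro sum.cong refl Bochner_Integration.integral_sum ii) auto
    finally show ?thesis by simp
  qed
  also have "\<dots> = (\<Sum>i<n. \<Sum>j\<in>{..<n} - {i}. integral\<^sup>L (D \<Otimes>\<^sub>M D) h) / (real n * (real n - 1))"
    using pair_integral(1)[OF h] by (intro arg_cong2[where f="(/)"] sum.cong refl) auto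
  also have "\<dots> = (real n * (real n - 1) * integral\<^sup>L (D \<Otimes>\<^sub>M D) h) / (real n * (real n - 1))"
    using n by (simp add: of_nat_diff)
  also have "\<dots> = integral\<^sup>L (D \<Otimes>\<^sub>M D) h" using n by simp
  finally show "integral\<^sup>L M (\<lambda>w. (\<Sum>i<n. \<Sum>j\<in>{..<n} - {i}. h (Z i w, Z j w)) / (real n * (real n - 1)))
         = integral\<^sup>L (D \<Otimes>\<^sub>M D) h" .
qed

end

lemma exp_neg_ln: "(c::real) > 0 \<Longrightarrow> exp (- ln c) = 1 / c"
  by (simp add: exp_minus inverse_eq_divide)

lemma ustat_exp_bound:
  fixes n :: nat and L6 :: real
  assumes n: "n \<ge> 2" and L: "0 < L6" "L6 < n"
  shows "exp (- 2 * real (n div 2) * (L6 / n)) \<le> exp (1 - L6)"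
proof -
  have "real n - 1 \<le> 2 * real (n div 2)" by linarith
  then have "(real n - 1) * (L6 / n) \<le> 2 * real (n div 2) * (L6 / n)"
    using L n by (intro mult_right_mono) auto
  moreover have "(real n - 1) * (L6 / n) = L6 - L6 / n" using n by (simp add: field_simps)
  moreover have "L6 / n < 1" using L n by simp
  ultimately show ?thesis by simp
qed

lemma three_exp: "0 < (d::real) \<Longrightarrow> exp (1 - ln (6 / d)) \<le> d / 2"
proof -
  assume d: "0 < d"
  have "exp (1 - ln (6 / d)) = exp 1 * (d / 6)" using d by (simp add: exp_diff)
  also have "\<dots> \<le> 3 * (d / 6)" using exp_le d by (intro mult_right_mono) auto
  finally show ?thesis by simp
qed

lemma plus_side:
  fixes M :: "'w measure" and D :: "('y \<times> 'x1 \<times> 'x2) measure" and Z :: "nat \<Rightarrow> 'w \<Rightarrow> 'y \<times> 'x1 \<times> 'x2"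
    and L :: "'f \<Rightarrow> 'y \<times> 'x1 \<times> 'x2 \<Rightarrow> real" and F :: "'f set" and f fref :: 'f
    and n :: nat and eps delta Bi Br bo S :: real
  assumes smp: "sample M D Z n"
    and fF: "f \<in> F" and Lif: "integrable D (L f)" and Lir: "integrable D (L fref)"
    and hint: "integrable (D \<Otimes>\<^sub>M D) (\<lambda>p. L f (switch_pt (fst p) (snd p)))"
    and bi: "\<forall>z. 0 \<le> L f z \<and> L f z \<le> Bi" and br: "\<forall>z. \<bar>L f z - L fref z\<bar> \<le> Br"
    and rash: "e_orig D L f \<le> e_orig D L fref + eps" and eps: "eps \<ge> 0"
    and ao: "AE w in M. 0 < bo \<and> bo \<le> emp_orig n L Z f w"
    and as: "AE w in M. emp_switch n L Z f w \<le> S"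
    and delta: "0 < delta" "delta < 1"
  shows "\<exists>A\<in>sets M. measure M A \<le> delta \<and> (\<forall>w\<in>space M - A.
           f \<in> emp_rashomon F n L Z fref (eps + 2 * Br * sqrt (ln (3 / delta) / (2 * real n))) w \<and>
           MR D L f \<le> emp_MR n L Z f w
              + (S / bo - (S - Bi * sqrt (ln (6 / delta) / real n)) / (bo + Bi * sqrt (ln (6 / delta) / (2 * real n)))))"
proof -
  interpret sample M D Z n by (rule smp)
  have n2: "n \<ge> 2" by (rule n)
  have bi0: "\<And>z. 0 \<le> L f z" and bi1: "\<And>z. L f z \<le> Bi" using bi by auto
  have br': "\<And>z. \<bar>L f z - L fref z\<bar> \<le> Br" using br by auto
  have npos: "real n > 0" using n2 by simp
  define L3 where "L3 = ln (3 / delta)"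
  define L6 where "L6 = ln (6 / delta)"
  have L3: "L3 > 0" using delta by (simp add: L3_def)
  have L6: "L6 > 0" using delta by (simp add: L6_def)
  define a where "a = Bi * sqrt (L6 / real n)"
  define b where "b = Bi * sqrt (L6 / (2 * real n))"
  define tR where "tR = 2 * Br * sqrt (L3 / (2 * real n))"
  define g where "g = (\<lambda>z. L f z - L fref z)"
  define h where "h = (\<lambda>p. L f (switch_pt (fst p) (snd p)))"
  define x where "x = integral\<^sup>L (D \<Otimes>\<^sub>M D) h"
  define y where "y = integral\<^sup>L D (L f)"
  have Lmf[measurable]: "L f \<in> borel_measurable D" using Lif by (rule borel_measurable_integrable)
  have Lmr[measurable]: "L fref \<in> borel_measurable D" using Lir by (rule borel_measurable_integrable)
  have gm[measurable]: "g \<in> borel_measurable D" unfolding g_def by measurable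
  have hi: "integrable (D \<Otimes>\<^sub>M D) h" using hint by (simp add: h_def)
  have hm[measurable]: "h \<in> borel_measurable (D \<Otimes>\<^sub>M D)" using hi by (rule borel_measurable_integrable)
  have mg[measurable]: "(\<lambda>w. (\<Sum>i<n. g (Z i w)) / n) \<in> borel_measurable M"
    by (intro borel_measurable_divide borel_measurable_sum borel_measurable_const) (simp add: measurable_compose[OF Zmeas gm])
  have mf[measurable]: "(\<lambda>w. (\<Sum>i<n. L f (Z i w)) / n) \<in> borel_measurable M"
    by (intro borel_measurable_divide borel_measurable_sum borel_measurable_const) (simp add: measurable_compose[OF Zmeas Lmf])
  have mh[measurable]: "(\<lambda>w. (\<Sum>i<n. \<Sum>j\<in>{..<n} - {i}. h (Z i w, Z j w)) / (real n * (real n - 1))) \<in> borel_measurable M"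
  proof -
    have "(\<lambda>w. h (Z i w, Z j w)) \<in> borel_measurable M" if "i < n" "j < n" for i j
      using that by measurable
    then show ?thesis
      by (intro borel_measurable_divide borel_measurable_sum borel_measurable_const) auto
  qed
  have so_eq: "emp_orig n L Z f w = (\<Sum>i<n. L f (Z i w)) / n" for w by (simp add: emp_orig_def)
  have s_eq: "emp_switch n L Z f w = (\<Sum>i<n. \<Sum>j\<in>{..<n} - {i}. h (Z i w, Z j w)) / (real n * (real n - 1))" for w
    by (simp add: emp_switch_def h_def)
  have diff_eq: "emp_orig n L Z f w - emp_orig n L Z fref w = (\<Sum>i<n. g (Z i w)) / n" for w
    by (simp add: emp_orig_def g_def sum_subtractf diff_divide_distrib)
  have so_le: "emp_orig n L Z f w \<le> Bi" for w
  proof -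
    have "(\<Sum>i<n. L f (Z i w)) \<le> (\<Sum>i<n. Bi)" using bi1 by (intro sum_mono) auto
    then show ?thesis unfolding so_eq using npos by (simp add: divide_le_eq mult.commute)
  qed
  have s_nn: "emp_switch n L Z f w \<ge> 0" for w
    unfolding emp_switch_def using bi0 n2 by (intro divide_nonneg_nonneg sum_nonneg) auto
  have bo: "0 < bo" using ao by (auto elim: eventually_mono)
  have "AE w in M. bo \<le> Bi" using ao
  proof (rule eventually_mono)
    fix w assume "0 < bo \<and> bo \<le> emp_orig n L Z f w"
    then show "bo \<le> Bi" using so_le[of w] by linarith
  qed
  then have boBi: "bo \<le> Bi" by simp
  have Bi: "Bi > 0" using bo boBi by simp
  have y_ge: "bo \<le> y"
  proof -
    have "bo \<le> integral\<^sup>L M (\<lambda>w. (\<Sum>i<n. L f (Z i w)) / n)"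
      using mean_integral(1)[OF Lmf Lif] ao unfolding so_eq by (intro integral_ge_const) (auto elim: eventually_mono)
    then show ?thesis using mean_integral(2)[OF Lmf Lif] by (simp add: y_def)
  qed
  have x_le: "x \<le> S"
  proof -
    have "integral\<^sup>L M (\<lambda>w. (\<Sum>i<n. \<Sum>j\<in>{..<n} - {i}. h (Z i w, Z j w)) / (real n * (real n - 1))) \<le> S"
      using ustat_integral(1)[OF hm hi] as unfolding s_eq by (intro integral_le_const) auto
    then show ?thesis using ustat_integral(2)[OF hm hi] by (simp add: x_def)
  qed
  have x_nn: "0 \<le> x" unfolding x_def h_def using bi0 by (intro Bochner_Integration.integral_nonneg) auto
  have x_le_Bi: "x \<le> Bi"
  proof -
    have "integral\<^sup>L M (\<lambda>w. (\<Sum>i<n. \<Sum>j\<in>{..<n} - {i}. h (Z i w, Z j w)) / (real n * (real n - 1))) \<le> Bi"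
    proof (rule integral_le_const[OF ustat_integral(1)[OF hm hi]], rule AE_I2)
      fix w
      have "(\<Sum>i<n. \<Sum>j\<in>{..<n} - {i}. h (Z i w, Z j w)) \<le> (\<Sum>i<n. \<Sum>j\<in>{..<n} - {i}. Bi)"
        using bi1 unfolding h_def by (intro sum_mono) auto
      also have "\<dots> = real n * (real n - 1) * Bi" using n2 by (simp add: of_nat_diff)
      finally show "(\<Sum>i<n. \<Sum>j\<in>{..<n} - {i}. h (Z i w, Z j w)) / (real n * (real n - 1)) \<le> Bi"
        using n2 by (simp add: divide_le_eq mult.commute)
    qed
    then show ?thesis using ustat_integral(2)[OF hm hi] by (simp add: x_def)
  qed
  have a_nn: "0 \<le> a" and b_nn: "0 \<le> b" and tR_nn: "0 \<le> tR"
    using Bi L6 L3 npos br by (auto simp: a_def b_def tR_def intro!: mult_nonneg_nonneg order_trans[OF abs_ge_zero br'])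
  have int_g: "integral\<^sup>L D g = e_orig D L f - e_orig D L fref"
    unfolding g_def e_orig_def using Lif Lir by simp
  obtain N1 where N1: "{w \<in> space M. \<not> (0 < bo \<and> bo \<le> emp_orig n L Z f w)} \<subseteq> N1" "emeasure M N1 = 0" "N1 \<in> sets M"
    using ao by (rule AE_E)
  obtain N2 where N2: "{w \<in> space M. \<not> (emp_switch n L Z f w \<le> S)} \<subseteq> N2" "emeasure M N2 = 0" "N2 \<in> sets M"
    using as by (rule AE_E)
  have mN1: "measure M N1 = 0" using N1 by (simp add: measure_def)
  have mN2: "measure M N2 = 0" using N2 by (simp add: measure_def)
  define R where "R = (if Br > 0 then {w\<in>space M. (\<Sum>i<n. g (Z i w)) / n \<ge> integral\<^sup>L D g + tR} else {})"
  have R_sets: "R \<in> sets M" by (cases "Br > 0") (simp_all add: R_def)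
  have mR: "measure M R \<le> delta / 3"
  proof (cases "Br > 0")
    case True
    have "measure M R \<le> exp (- 2 * real n * tR\<^sup>2 / (Br - - Br)\<^sup>2)"
    proof -
      have "- Br \<le> g z \<and> g z \<le> Br" for z using br'[of z] unfolding g_def by linarith
      from mean_hoeffding(1)[OF gm this _ tR_nn] True show ?thesis by (simp add: R_def)
    qed
    also have "- 2 * real n * tR\<^sup>2 / (Br - - Br)\<^sup>2 = - L3"
      using True npos L3 by (simp add: tR_def power_mult_distrib real_sqrt_pow2 field_simps)
    also have "exp (- L3) = delta / 3" using delta by (simp add: L3_def exp_neg_ln)
    finally show ?thesis .
  next
    case False then show ?thesis using delta by (simp add: R_def)
  qed
  define OE where "OE = {w\<in>space M. (\<Sum>i<n. L f (Z i w)) / n \<ge> integral\<^sup>L D (L f) + b}"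
  have OE_sets: "OE \<in> sets M" unfolding OE_def by measurable
  have mO: "measure M OE \<le> delta / 6"
  proof -
    have "measure M OE \<le> exp (- 2 * real n * b\<^sup>2 / (Bi - 0)\<^sup>2)"
      unfolding OE_def using bi0 bi1 Bi b_nn by (intro mean_hoeffding(1)[OF Lmf]) auto
    also have "- 2 * real n * b\<^sup>2 / (Bi - 0)\<^sup>2 = - L6"
      using Bi npos L6 by (simp add: b_def power_mult_distrib real_sqrt_pow2 field_simps)
    also have "exp (- L6) = delta / 6" using delta by (simp add: L6_def exp_neg_ln)
    finally show ?thesis .
  qed
  define SE where "SE = (if L6 < n then {w\<in>space M. (\<Sum>i<n. \<Sum>j\<in>{..<n} - {i}. h (Z i w, Z j w)) / (real n * (real n - 1))
                 \<le> integral\<^sup>L (D \<Otimes>\<^sub>M D) h - a} else {})"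
  have SE_sets: "SE \<in> sets M" by (cases "L6 < n") (simp_all add: SE_def)
  have mSE: "measure M SE \<le> delta / 2"
  proof (cases "L6 < n")
    case True
    have "measure M SE \<le> exp (- 2 * real (n div 2) * a\<^sup>2 / (Bi - 0)\<^sup>2)"
    proof -
      have "\<And>p. 0 \<le> h p \<and> h p \<le> Bi" using bi0 bi1 by (auto simp: h_def)
      from ustat_lower[OF hm this _ a_nn] True Bi show ?thesis by (simp add: SE_def)
    qed
    also have "- 2 * real (n div 2) * a\<^sup>2 / (Bi - 0)\<^sup>2 = - 2 * real (n div 2) * (L6 / n)"
      using Bi npos L6 by (simp add: a_def power_mult_distrib real_sqrt_pow2)
    also have "exp \<dots> \<le> exp (1 - L6)" by (rule ustat_exp_bound[OF n2 L6 True])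
    also have "\<dots> \<le> delta / 2" unfolding L6_def using delta by (intro three_exp) auto
    finally show ?thesis .
  next
    case False then show ?thesis using delta by (simp add: SE_def)
  qed
  define A where "A = N1 \<union> N2 \<union> R \<union> OE \<union> SE"
  have A_sets: "A \<in> sets M" unfolding A_def using N1 N2 R_sets OE_sets SE_sets by auto
  have mA: "measure M A \<le> delta"
  proof -
    have "measure M A \<le> measure M (N1 \<union> N2 \<union> R \<union> OE) + measure M SE"
      unfolding A_def using N1 N2 R_sets OE_sets SE_sets by (intro measure_Un_le) auto
    also have "measure M (N1 \<union> N2 \<union> R \<union> OE) \<le> measure M (N1 \<union> N2 \<union> R) + measure M OE"
      using N1 N2 R_sets OE_sets by (intro measure_Un_le) auto
    also have "measure M (N1 \<union> N2 \<union> R) \<le> measure M (N1 \<union> N2) + measure M R"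
      using N1 N2 R_sets by (intro measure_Un_le) auto
    also have "measure M (N1 \<union> N2) \<le> measure M N1 + measure M N2"
      using N1 N2 by (intro measure_Un_le) auto
    finally show ?thesis using mN1 mN2 mR mO mSE by simp
  qed
  have good: "f \<in> emp_rashomon F n L Z fref (eps + tR) w \<and>
           MR D L f \<le> emp_MR n L Z f w + (S / bo - (S - a) / (bo + b))" if w: "w \<in> space M - A" for w
  proof
    have wsp: "w \<in> space M" using w by simp
    have w1: "0 < bo \<and> bo \<le> emp_orig n L Z f w" using w N1(1) by (auto simp: A_def)
    have w2: "emp_switch n L Z f w \<le> S" using w N2(1) by (auto simp: A_def)
    have wR: "emp_orig n L Z f w \<le> emp_orig n L Z fref w + (eps + tR)"
    proof (cases "Br > 0")
      case True
      then have "\<not> ((\<Sum>i<n. g (Z i w)) / n \<ge> integral\<^sup>L D g + tR)" using w by (auto simp: A_def R_def)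
      then show ?thesis using diff_eq[of w] int_g rash
        by (simp add: e_orig_def)
    next
      case False
      then have "g z = 0" for z using br'[of z] by (auto simp: g_def)
      then have "emp_orig n L Z f w - emp_orig n L Z fref w = 0" using diff_eq[of w] by simp
      then show ?thesis using eps tR_nn by simp
    qed
    then show "f \<in> emp_rashomon F n L Z fref (eps + tR) w" using fF by (simp add: emp_rashomon_def)
    have wO: "emp_orig n L Z f w \<le> y + b" using w wsp unfolding so_eq by (auto simp: A_def OE_def y_def)
    have wS: "x - a \<le> emp_switch n L Z f w"
    proof (cases "L6 < n")
      case True
      then show ?thesis using w wsp unfolding s_eq by (auto simp: A_def SE_def x_def)
    next
      case False
      then have "1 \<le> L6 / n" using npos by simp
      then have "1 \<le> sqrt (L6 / n)" by simp
      then have "Bi \<le> a" unfolding a_def using Bi by (metis mult.right_neutral mult_left_mono less_imp_le)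
      then show ?thesis using x_le_Bi s_nn[of w] by simp
    qed
    have "x / y \<le> emp_switch n L Z f w / emp_orig n L Z f w + (S / bo - (S - a) / (bo + b))"
      by (rule alg_plus) (use w1 y_ge x_nn x_le a_nn b_nn wS s_nn wO in auto)
    then show "MR D L f \<le> emp_MR n L Z f w + (S / bo - (S - a) / (bo + b))"
      by (simp add: MR_def emp_MR_def x_def y_def h_def e_switch_def e_orig_def)
  qed
  show ?thesis
    using A_sets mA good unfolding a_def b_def tR_def L3_def L6_def by blast
qed

lemma minus_side:
  fixes M :: "'w measure" and D :: "('y \<times> 'x1 \<times> 'x2) measure" and Z :: "nat \<Rightarrow> 'w \<Rightarrow> 'y \<times> 'x1 \<times> 'x2"
    and L :: "'f \<Rightarrow> 'y \<times> 'x1 \<times> 'x2 \<Rightarrow> real" and F :: "'f set" and f fref :: 'f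
    and n :: nat and eps delta Bi Br bo S :: real
  assumes smp: "sample M D Z n"
    and fF: "f \<in> F" and Lif: "integrable D (L f)" and Lir: "integrable D (L fref)"
    and hint: "integrable (D \<Otimes>\<^sub>M D) (\<lambda>p. L f (switch_pt (fst p) (snd p)))"
    and bi: "\<forall>z. 0 \<le> L f z \<and> L f z \<le> Bi" and br: "\<forall>z. \<bar>L f z - L fref z\<bar> \<le> Br"
    and rash: "e_orig D L f \<le> e_orig D L fref + eps" and eps: "eps \<ge> 0"
    and ao: "AE w in M. 0 < bo \<and> bo \<le> emp_orig n L Z f w"
    and as: "AE w in M. emp_switch n L Z f w \<le> S"
    and delta: "0 < delta" "delta < 1"
  shows "\<exists>A\<in>sets M. measure M A \<le> delta \<and> (\<forall>w\<in>space M - A.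
           f \<in> emp_rashomon F n L Z fref (eps + 2 * Br * sqrt (ln (3 / delta) / (2 * real n))) w \<and>
           emp_MR n L Z f w \<le> MR D L f
              + (S / bo - (S - Bi * sqrt (ln (6 / delta) / real n)) / (bo + Bi * sqrt (ln (6 / delta) / (2 * real n)))))"
proof -
  interpret sample M D Z n by (rule smp)
  have n2: "n \<ge> 2" by (rule n)
  have bi0: "\<And>z. 0 \<le> L f z" and bi1: "\<And>z. L f z \<le> Bi" using bi by auto
  have br': "\<And>z. \<bar>L f z - L fref z\<bar> \<le> Br" using br by auto
  have npos: "real n > 0" using n2 by simp
  define L3 where "L3 = ln (3 / delta)"
  define L6 where "L6 = ln (6 / delta)"
  have L3: "L3 > 0" using delta by (simp add: L3_def)
  have L6: "L6 > 0" using delta by (simp add: L6_def)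
  define a where "a = Bi * sqrt (L6 / real n)"
  define b where "b = Bi * sqrt (L6 / (2 * real n))"
  define tR where "tR = 2 * Br * sqrt (L3 / (2 * real n))"
  define g where "g = (\<lambda>z. L f z - L fref z)"
  define h where "h = (\<lambda>p. L f (switch_pt (fst p) (snd p)))"
  define x where "x = integral\<^sup>L (D \<Otimes>\<^sub>M D) h"
  define y where "y = integral\<^sup>L D (L f)"
  have Lmf[measurable]: "L f \<in> borel_measurable D" using Lif by (rule borel_measurable_integrable)
  have Lmr[measurable]: "L fref \<in> borel_measurable D" using Lir by (rule borel_measurable_integrable)
  have gm[measurable]: "g \<in> borel_measurable D" unfolding g_def by measurable
  have hi: "integrable (D \<Otimes>\<^sub>M D) h" using hint by (simp add: h_def)
  have hm[measurable]: "h \<in> borel_measurable (D \<Otimes>\<^sub>M D)" using hi by (rule borel_measurable_integrable)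
  have mg[measurable]: "(\<lambda>w. (\<Sum>i<n. g (Z i w)) / n) \<in> borel_measurable M"
    by (intro borel_measurable_divide borel_measurable_sum borel_measurable_const) (simp add: measurable_compose[OF Zmeas gm])
  have mf[measurable]: "(\<lambda>w. (\<Sum>i<n. L f (Z i w)) / n) \<in> borel_measurable M"
    by (intro borel_measurable_divide borel_measurable_sum borel_measurable_const) (simp add: measurable_compose[OF Zmeas Lmf])
  have mh[measurable]: "(\<lambda>w. (\<Sum>i<n. \<Sum>j\<in>{..<n} - {i}. h (Z i w, Z j w)) / (real n * (real n - 1))) \<in> borel_measurable M"
  proof -
    have "(\<lambda>w. h (Z i w, Z j w)) \<in> borel_measurable M" if "i < n" "j < n" for i j
      using that by measurable
    then show ?thesis
      by (intro borel_measurable_divide borel_measurable_sum borel_measurable_const) auto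
  qed
  have so_eq: "emp_orig n L Z f w = (\<Sum>i<n. L f (Z i w)) / n" for w by (simp add: emp_orig_def)
  have s_eq: "emp_switch n L Z f w = (\<Sum>i<n. \<Sum>j\<in>{..<n} - {i}. h (Z i w, Z j w)) / (real n * (real n - 1))" for w
    by (simp add: emp_switch_def h_def)
  have diff_eq: "emp_orig n L Z f w - emp_orig n L Z fref w = (\<Sum>i<n. g (Z i w)) / n" for w
    by (simp add: emp_orig_def g_def sum_subtractf diff_divide_distrib)
  have so_le: "emp_orig n L Z f w \<le> Bi" for w
  proof -
    have "(\<Sum>i<n. L f (Z i w)) \<le> (\<Sum>i<n. Bi)" using bi1 by (intro sum_mono) auto
    then show ?thesis unfolding so_eq using npos by (simp add: divide_le_eq mult.commute)
  qed
  have s_nn: "emp_switch n L Z f w \<ge> 0" for w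
    unfolding emp_switch_def using bi0 n2 by (intro divide_nonneg_nonneg sum_nonneg) auto
  have bo: "0 < bo" using ao by (auto elim: eventually_mono)
  have "AE w in M. bo \<le> Bi" using ao
  proof (rule eventually_mono)
    fix w assume "0 < bo \<and> bo \<le> emp_orig n L Z f w"
    then show "bo \<le> Bi" using so_le[of w] by linarith
  qed
  then have boBi: "bo \<le> Bi" by simp
  have Bi: "Bi > 0" using bo boBi by simp
  have y_ge: "bo \<le> y"
  proof -
    have "bo \<le> integral\<^sup>L M (\<lambda>w. (\<Sum>i<n. L f (Z i w)) / n)"
      using mean_integral(1)[OF Lmf Lif] ao unfolding so_eq by (intro integral_ge_const) (auto elim: eventually_mono)
    then show ?thesis using mean_integral(2)[OF Lmf Lif] by (simp add: y_def)
  qed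
  have x_le: "x \<le> S"
  proof -
    have "integral\<^sup>L M (\<lambda>w. (\<Sum>i<n. \<Sum>j\<in>{..<n} - {i}. h (Z i w, Z j w)) / (real n * (real n - 1))) \<le> S"
      using ustat_integral(1)[OF hm hi] as unfolding s_eq by (intro integral_le_const) auto
    then show ?thesis using ustat_integral(2)[OF hm hi] by (simp add: x_def)
  qed
  have x_nn: "0 \<le> x" unfolding x_def h_def using bi0 by (intro Bochner_Integration.integral_nonneg) auto
  have s_le_Bi: "emp_switch n L Z f w \<le> Bi" for w
  proof -
    have "(\<Sum>i<n. \<Sum>j\<in>{..<n} - {i}. h (Z i w, Z j w)) \<le> (\<Sum>i<n. \<Sum>j\<in>{..<n} - {i}. Bi)"
      using bi1 unfolding h_def by (intro sum_mono) auto
    also have "\<dots> = real n * (real n - 1) * Bi" using n2 by (simp add: of_nat_diff)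
    finally show ?thesis unfolding s_eq using n2 by (simp add: divide_le_eq mult.commute)
  qed
  have x_le_Bi: "x \<le> Bi"
  proof -
    have "integral\<^sup>L M (\<lambda>w. (\<Sum>i<n. \<Sum>j\<in>{..<n} - {i}. h (Z i w, Z j w)) / (real n * (real n - 1))) \<le> Bi"
    proof (rule integral_le_const[OF ustat_integral(1)[OF hm hi]], rule AE_I2)
      fix w
      have "(\<Sum>i<n. \<Sum>j\<in>{..<n} - {i}. h (Z i w, Z j w)) \<le> (\<Sum>i<n. \<Sum>j\<in>{..<n} - {i}. Bi)"
        using bi1 unfolding h_def by (intro sum_mono) auto
      also have "\<dots> = real n * (real n - 1) * Bi" using n2 by (simp add: of_nat_diff)
      finally show "(\<Sum>i<n. \<Sum>j\<in>{..<n} - {i}. h (Z i w, Z j w)) / (real n * (real n - 1)) \<le> Bi"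
        using n2 by (simp add: divide_le_eq mult.commute)
    qed
    then show ?thesis using ustat_integral(2)[OF hm hi] by (simp add: x_def)
  qed
  have a_nn: "0 \<le> a" and b_nn: "0 \<le> b" and tR_nn: "0 \<le> tR"
    using Bi L6 L3 npos br by (auto simp: a_def b_def tR_def intro!: mult_nonneg_nonneg order_trans[OF abs_ge_zero br'])
  have int_g: "integral\<^sup>L D g = e_orig D L f - e_orig D L fref"
    unfolding g_def e_orig_def using Lif Lir by simp
  obtain N1 where N1: "{w \<in> space M. \<not> (0 < bo \<and> bo \<le> emp_orig n L Z f w)} \<subseteq> N1" "emeasure M N1 = 0" "N1 \<in> sets M"
    using ao by (rule AE_E)
  obtain N2 where N2: "{w \<in> space M. \<not> (emp_switch n L Z f w \<le> S)} \<subseteq> N2" "emeasure M N2 = 0" "N2 \<in> sets M"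
    using as by (rule AE_E)
  have mN1: "measure M N1 = 0" using N1 by (simp add: measure_def)
  have mN2: "measure M N2 = 0" using N2 by (simp add: measure_def)
  define R where "R = (if Br > 0 then {w\<in>space M. (\<Sum>i<n. g (Z i w)) / n \<ge> integral\<^sup>L D g + tR} else {})"
  have R_sets: "R \<in> sets M" by (cases "Br > 0") (simp_all add: R_def)
  have mR: "measure M R \<le> delta / 3"
  proof (cases "Br > 0")
    case True
    have "measure M R \<le> exp (- 2 * real n * tR\<^sup>2 / (Br - - Br)\<^sup>2)"
    proof -
      have "- Br \<le> g z \<and> g z \<le> Br" for z using br'[of z] unfolding g_def by linarith
      from mean_hoeffding(1)[OF gm this _ tR_nn] True show ?thesis by (simp add: R_def)
    qed
    also have "- 2 * real n * tR\<^sup>2 / (Br - - Br)\<^sup>2 = - L3"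
      using True npos L3 by (simp add: tR_def power_mult_distrib real_sqrt_pow2 field_simps)
    also have "exp (- L3) = delta / 3" using delta by (simp add: L3_def exp_neg_ln)
    finally show ?thesis .
  next
    case False then show ?thesis using delta by (simp add: R_def)
  qed
  define OE where "OE = {w\<in>space M. (\<Sum>i<n. L f (Z i w)) / n \<le> integral\<^sup>L D (L f) - b}"
  have OE_sets: "OE \<in> sets M" unfolding OE_def by measurable
  have mO: "measure M OE \<le> delta / 6"
  proof -
    have "measure M OE \<le> exp (- 2 * real n * b\<^sup>2 / (Bi - 0)\<^sup>2)"
      unfolding OE_def using bi0 bi1 Bi b_nn by (intro mean_hoeffding(2)[OF Lmf]) auto
    also have "- 2 * real n * b\<^sup>2 / (Bi - 0)\<^sup>2 = - L6"
      using Bi npos L6 by (simp add: b_def power_mult_distrib real_sqrt_pow2 field_simps)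
    also have "exp (- L6) = delta / 6" using delta by (simp add: L6_def exp_neg_ln)
    finally show ?thesis .
  qed
  define SE where "SE = (if L6 < n then {w\<in>space M. (\<Sum>i<n. \<Sum>j\<in>{..<n} - {i}. h (Z i w, Z j w)) / (real n * (real n - 1))
                 \<ge> integral\<^sup>L (D \<Otimes>\<^sub>M D) h + a} else {})"
  have SE_sets: "SE \<in> sets M" by (cases "L6 < n") (simp_all add: SE_def)
  have mSE: "measure M SE \<le> delta / 2"
  proof (cases "L6 < n")
    case True
    have "measure M SE \<le> exp (- 2 * real (n div 2) * a\<^sup>2 / (Bi - 0)\<^sup>2)"
    proof -
      have "\<And>p. 0 \<le> h p \<and> h p \<le> Bi" using bi0 bi1 by (auto simp: h_def)
      from ustat_upper[OF hm this _ a_nn] True Bi show ?thesis by (simp add: SE_def)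
    qed
    also have "- 2 * real (n div 2) * a\<^sup>2 / (Bi - 0)\<^sup>2 = - 2 * real (n div 2) * (L6 / n)"
      using Bi npos L6 by (simp add: a_def power_mult_distrib real_sqrt_pow2)
    also have "exp \<dots> \<le> exp (1 - L6)" by (rule ustat_exp_bound[OF n2 L6 True])
    also have "\<dots> \<le> delta / 2" unfolding L6_def using delta by (intro three_exp) auto
    finally show ?thesis .
  next
    case False then show ?thesis using delta by (simp add: SE_def)
  qed
  define A where "A = N1 \<union> N2 \<union> R \<union> OE \<union> SE"
  have A_sets: "A \<in> sets M" unfolding A_def using N1 N2 R_sets OE_sets SE_sets by auto
  have mA: "measure M A \<le> delta"
  proof -
    have "measure M A \<le> measure M (N1 \<union> N2 \<union> R \<union> OE) + measure M SE"
      unfolding A_def using N1 N2 R_sets OE_sets SE_sets by (intro measure_Un_le) auto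
    also have "measure M (N1 \<union> N2 \<union> R \<union> OE) \<le> measure M (N1 \<union> N2 \<union> R) + measure M OE"
      using N1 N2 R_sets OE_sets by (intro measure_Un_le) auto
    also have "measure M (N1 \<union> N2 \<union> R) \<le> measure M (N1 \<union> N2) + measure M R"
      using N1 N2 R_sets by (intro measure_Un_le) auto
    also have "measure M (N1 \<union> N2) \<le> measure M N1 + measure M N2"
      using N1 N2 by (intro measure_Un_le) auto
    finally show ?thesis using mN1 mN2 mR mO mSE by simp
  qed
  have good: "f \<in> emp_rashomon F n L Z fref (eps + tR) w \<and>
           emp_MR n L Z f w \<le> MR D L f + (S / bo - (S - a) / (bo + b))" if w: "w \<in> space M - A" for w
  proof
    have wsp: "w \<in> space M" using w by simp
    have w1: "0 < bo \<and> bo \<le> emp_orig n L Z f w" using w N1(1) by (auto simp: A_def)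
    have w2: "emp_switch n L Z f w \<le> S" using w N2(1) by (auto simp: A_def)
    have wR: "emp_orig n L Z f w \<le> emp_orig n L Z fref w + (eps + tR)"
    proof (cases "Br > 0")
      case True
      then have "\<not> ((\<Sum>i<n. g (Z i w)) / n \<ge> integral\<^sup>L D g + tR)" using w by (auto simp: A_def R_def)
      then show ?thesis using diff_eq[of w] int_g rash
        by (simp add: e_orig_def)
    next
      case False
      then have "g z = 0" for z using br'[of z] by (auto simp: g_def)
      then have "emp_orig n L Z f w - emp_orig n L Z fref w = 0" using diff_eq[of w] by simp
      then show ?thesis using eps tR_nn by simp
    qed
    then show "f \<in> emp_rashomon F n L Z fref (eps + tR) w" using fF by (simp add: emp_rashomon_def)
    have wO: "y - b \<le> emp_orig n L Z f w" using w wsp unfolding so_eq by (auto simp: A_def OE_def y_def)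
    have wS: "emp_switch n L Z f w \<le> x + a"
    proof (cases "L6 < n")
      case True
      then show ?thesis using w wsp unfolding s_eq by (auto simp: A_def SE_def x_def)
    next
      case False
      then have "1 \<le> L6 / n" using npos by simp
      then have "1 \<le> sqrt (L6 / n)" by simp
      then have "Bi \<le> a" unfolding a_def using Bi by (metis mult.right_neutral mult_left_mono less_imp_le)
      then show ?thesis using x_nn s_le_Bi[of w] by simp
    qed
    have "emp_switch n L Z f w / emp_orig n L Z f w \<le> x / y + (S / bo - (S - a) / (bo + b))"
      by (rule alg_minus) (use w1 w2 y_ge x_nn x_le a_nn b_nn wS s_nn wO in auto)
    then show "emp_MR n L Z f w \<le> MR D L f + (S / bo - (S - a) / (bo + b))"
      by (simp add: MR_def emp_MR_def x_def y_def h_def e_switch_def e_orig_def)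
  qed
  show ?thesis
    using A_sets mA good unfolding a_def b_def tR_def L3_def L6_def by blast
qed

theorem theorem6:
  fixes M :: "'w measure"
    and D :: "('y \<times> 'x1 \<times> 'x2) measure"
    and Z :: "nat \<Rightarrow> 'w \<Rightarrow> 'y \<times> 'x1 \<times> 'x2"
    and F :: "('x1 \<times> 'x2 \<Rightarrow> 'y) set"
    and L :: "('x1 \<times> 'x2 \<Rightarrow> 'y) \<Rightarrow> 'y \<times> 'x1 \<times> 'x2 \<Rightarrow> real"
    and fref fplus fminus :: "'x1 \<times> 'x2 \<Rightarrow> 'y"
    and n :: nat
    and eps delta B_ind B_ref b_orig B_switch :: real
  assumes M: "prob_space M"
    and D: "prob_space D"
    and n: "n \<ge> 2"
    and Z_meas: "\<forall>i<n. Z i \<in> measurable M D \<and> distr M D (Z i) = D"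
    and Z_indep: "prob_space.indep_vars M (\<lambda>_. D) Z {..<n}"
    and L_nonneg: "\<forall>f\<in>F. \<forall>z. 0 \<le> L f z"
    and L_int_orig: "\<forall>f\<in>F. integrable D (L f)"
    and L_int_switch: "\<forall>f\<in>F. integrable (D \<Otimes>\<^sub>M D) (\<lambda>p. L f (switch_pt (fst p) (snd p)))"
    and fref: "fref \<in> F"
    and max_exists: "\<forall>e\<ge>0. \<forall>w\<in>space M. \<exists>f\<in>emp_rashomon F n L Z fref e w.
                        \<forall>g\<in>emp_rashomon F n L Z fref e w. emp_MR n L Z g w \<le> emp_MR n L Z f w"
    and min_exists: "\<forall>e\<ge>0. \<forall>w\<in>space M. \<exists>f\<in>emp_rashomon F n L Z fref e w.
                        \<forall>g\<in>emp_rashomon F n L Z fref e w. emp_MR n L Z f w \<le> emp_MR n L Z g w"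
    and eps: "eps \<ge> 0"
    and delta: "0 < delta" "delta < 1"
    and fplus: "fplus \<in> rashomon F D L fref eps"
               "\<forall>g\<in>rashomon F D L fref eps. MR D L g \<le> MR D L fplus"
    and fminus: "fminus \<in> rashomon F D L fref eps"
               "\<forall>g\<in>rashomon F D L fref eps. MR D L fminus \<le> MR D L g"
    and bounded_ind: "\<forall>f\<in>{fplus, fminus}. \<forall>z. 0 \<le> L f z \<and> L f z \<le> B_ind"
    and bounded_ref: "\<forall>f\<in>{fplus, fminus}. \<forall>z. \<bar>L f z - L fref z\<bar> \<le> B_ref"
    and bounded_orig: "\<forall>f\<in>{fplus, fminus}.
                         (AE w in M. 0 < b_orig \<and> b_orig \<le> emp_orig n L Z f w)"
    and bounded_switch: "\<forall>f\<in>{fplus, fminus}. (AE w in M. emp_switch n L Z f w \<le> B_switch)"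
  shows "let eps1 = eps + 2 * B_ref * sqrt (ln (3 / delta) / (2 * real n));
             Q1 = B_switch / b_orig
                  - (B_switch - B_ind * sqrt (ln (6 / delta) / real n))
                    / (b_orig + B_ind * sqrt (ln (6 / delta) / (2 * real n)))
         in (\<exists>A\<in>sets M. {w \<in> space M. MCR_plus F D L fref eps > emp_MCR_plus F n L Z fref eps1 w + Q1} \<subseteq> A
                        \<and> measure M A \<le> delta)
          \<and> (\<exists>A\<in>sets M. {w \<in> space M. MCR_minus F D L fref eps < emp_MCR_minus F n L Z fref eps1 w - Q1} \<subseteq> A
                        \<and> measure M A \<le> delta)"
proof -
  define eps1 where "eps1 = eps + 2 * B_ref * sqrt (ln (3 / delta) / (2 * real n))"
  define Q1 where "Q1 = B_switch / b_orig
                  - (B_switch - B_ind * sqrt (ln (6 / delta) / real n))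
                    / (b_orig + B_ind * sqrt (ln (6 / delta) / (2 * real n)))"
  have smp: "sample M D Z n"
    by (rule sample.intro[OF M D n Z_meas Z_indep])
  have fpF: "fplus \<in> F" and fmF: "fminus \<in> F" using fplus(1) fminus(1) by (auto simp: rashomon_def)
  have Bref: "B_ref \<ge> 0" using bounded_ref by (meson abs_ge_zero insertCI order_trans)
  have L3: "0 \<le> ln (3 / delta)" using delta by (intro ln_ge_zero) (simp add: field_simps)
  have eps1: "eps1 \<ge> 0" unfolding eps1_def using eps Bref L3 by (intro add_nonneg_nonneg mult_nonneg_nonneg) auto
  have sup_ge: "emp_MR n L Z g w \<le> emp_MCR_plus F n L Z fref eps1 w"
    if wsp: "w \<in> space M" and gin: "g \<in> emp_rashomon F n L Z fref eps1 w" for g w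
  proof -
    obtain fm where fm: "fm \<in> emp_rashomon F n L Z fref eps1 w"
      "\<forall>g\<in>emp_rashomon F n L Z fref eps1 w. emp_MR n L Z g w \<le> emp_MR n L Z fm w"
      using max_exists[rule_format, OF eps1 wsp] by blast
    have "emp_MCR_plus F n L Z fref eps1 w = emp_MR n L Z fm w"
      unfolding emp_MCR_plus_def using fm by (intro cSup_eq_maximum) auto
    then show ?thesis using fm gin by simp
  qed
  have inf_le: "emp_MCR_minus F n L Z fref eps1 w \<le> emp_MR n L Z g w"
    if wsp: "w \<in> space M" and gin: "g \<in> emp_rashomon F n L Z fref eps1 w" for g w
  proof -
    obtain fm where fm: "fm \<in> emp_rashomon F n L Z fref eps1 w"
      "\<forall>g\<in>emp_rashomon F n L Z fref eps1 w. emp_MR n L Z fm w \<le> emp_MR n L Z g w"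
      using min_exists[rule_format, OF eps1 wsp] by blast
    have "emp_MCR_minus F n L Z fref eps1 w = emp_MR n L Z fm w"
      unfolding emp_MCR_minus_def using fm by (intro cInf_eq_minimum) auto
    then show ?thesis using fm gin by simp
  qed
  have MCRp: "MCR_plus F D L fref eps = MR D L fplus"
    unfolding MCR_plus_def using fplus by (intro cSup_eq_maximum) auto
  have MCRm: "MCR_minus F D L fref eps = MR D L fminus"
    unfolding MCR_minus_def using fminus by (intro cInf_eq_minimum) auto
  obtain A1 where A1: "A1 \<in> sets M" "measure M A1 \<le> delta"
    "\<forall>w\<in>space M - A1. fplus \<in> emp_rashomon F n L Z fref eps1 w \<and>
           MR D L fplus \<le> emp_MR n L Z fplus w + Q1"
  proof -
    have "\<exists>A\<in>sets M. measure M A \<le> delta \<and> (\<forall>w\<in>space M - A.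
           fplus \<in> emp_rashomon F n L Z fref (eps + 2 * B_ref * sqrt (ln (3 / delta) / (2 * real n))) w \<and>
           MR D L fplus \<le> emp_MR n L Z fplus w
              + (B_switch / b_orig - (B_switch - B_ind * sqrt (ln (6 / delta) / real n)) / (b_orig + B_ind * sqrt (ln (6 / delta) / (2 * real n)))))"
    proof (rule plus_side[OF smp fpF])
      show "integrable D (L fplus)" using L_int_orig fpF by blast
      show "integrable D (L fref)" using L_int_orig fref by blast
      show "integrable (D \<Otimes>\<^sub>M D) (\<lambda>p. L fplus (switch_pt (fst p) (snd p)))" using L_int_switch fpF by blast
      show "\<forall>z. 0 \<le> L fplus z \<and> L fplus z \<le> B_ind" using bounded_ind by blast
      show "\<forall>z. \<bar>L fplus z - L fref z\<bar> \<le> B_ref" using bounded_ref by blast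
      show "e_orig D L fplus \<le> e_orig D L fref + eps" using fplus(1) by (simp add: rashomon_def)
      show "0 \<le> eps" by (rule eps)
      show "AE w in M. 0 < b_orig \<and> b_orig \<le> emp_orig n L Z fplus w" using bounded_orig by blast
      show "AE w in M. emp_switch n L Z fplus w \<le> B_switch" using bounded_switch by blast
      show "0 < delta" "delta < 1" using delta by auto
    qed
    then obtain A where "A \<in> sets M" "measure M A \<le> delta" "\<forall>w\<in>space M - A.
           fplus \<in> emp_rashomon F n L Z fref eps1 w \<and> MR D L fplus \<le> emp_MR n L Z fplus w + Q1"
      unfolding eps1_def Q1_def by blast
    then show ?thesis by (rule that)
  qed
  obtain A2 where A2: "A2 \<in> sets M" "measure M A2 \<le> delta"
    "\<forall>w\<in>space M - A2. fminus \<in> emp_rashomon F n L Z fref eps1 w \<and>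
           emp_MR n L Z fminus w \<le> MR D L fminus + Q1"
  proof -
    have "\<exists>A\<in>sets M. measure M A \<le> delta \<and> (\<forall>w\<in>space M - A.
           fminus \<in> emp_rashomon F n L Z fref (eps + 2 * B_ref * sqrt (ln (3 / delta) / (2 * real n))) w \<and>
           emp_MR n L Z fminus w \<le> MR D L fminus
              + (B_switch / b_orig - (B_switch - B_ind * sqrt (ln (6 / delta) / real n)) / (b_orig + B_ind * sqrt (ln (6 / delta) / (2 * real n)))))"
    proof (rule minus_side[OF smp fmF])
      show "integrable D (L fminus)" using L_int_orig fmF by blast
      show "integrable D (L fref)" using L_int_orig fref by blast
      show "integrable (D \<Otimes>\<^sub>M D) (\<lambda>p. L fminus (switch_pt (fst p) (snd p)))" using L_int_switch fmF by blast
      show "\<forall>z. 0 \<le> L fminus z \<and> L fminus z \<le> B_ind" using bounded_ind by blast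
      show "\<forall>z. \<bar>L fminus z - L fref z\<bar> \<le> B_ref" using bounded_ref by blast
      show "e_orig D L fminus \<le> e_orig D L fref + eps" using fminus(1) by (simp add: rashomon_def)
      show "0 \<le> eps" by (rule eps)
      show "AE w in M. 0 < b_orig \<and> b_orig \<le> emp_orig n L Z fminus w" using bounded_orig by blast
      show "AE w in M. emp_switch n L Z fminus w \<le> B_switch" using bounded_switch by blast
      show "0 < delta" "delta < 1" using delta by auto
    qed
    then obtain A where "A \<in> sets M" "measure M A \<le> delta" "\<forall>w\<in>space M - A.
           fminus \<in> emp_rashomon F n L Z fref eps1 w \<and> emp_MR n L Z fminus w \<le> MR D L fminus + Q1"
      unfolding eps1_def Q1_def by blast
    then show ?thesis by (rule that)
  qed
  have P1: "{w \<in> space M. MCR_plus F D L fref eps > emp_MCR_plus F n L Z fref eps1 w + Q1} \<subseteq> A1"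
  proof
    fix w assume w: "w \<in> {w \<in> space M. MCR_plus F D L fref eps > emp_MCR_plus F n L Z fref eps1 w + Q1}"
    show "w \<in> A1"
    proof (rule ccontr)
      assume "w \<notin> A1"
      then have g: "fplus \<in> emp_rashomon F n L Z fref eps1 w" "MR D L fplus \<le> emp_MR n L Z fplus w + Q1"
        using A1(3) w by auto
      have "emp_MR n L Z fplus w \<le> emp_MCR_plus F n L Z fref eps1 w" using sup_ge w g(1) by simp
      then show False using w g(2) MCRp by simp
    qed
  qed
  have P2: "{w \<in> space M. MCR_minus F D L fref eps < emp_MCR_minus F n L Z fref eps1 w - Q1} \<subseteq> A2"
  proof
    fix w assume w: "w \<in> {w \<in> space M. MCR_minus F D L fref eps < emp_MCR_minus F n L Z fref eps1 w - Q1}"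
    show "w \<in> A2"
    proof (rule ccontr)
      assume "w \<notin> A2"
      then have g: "fminus \<in> emp_rashomon F n L Z fref eps1 w" "emp_MR n L Z fminus w \<le> MR D L fminus + Q1"
        using A2(3) w by auto
      have "emp_MCR_minus F n L Z fref eps1 w \<le> emp_MR n L Z fminus w" using inf_le w g(1) by simp
      then show False using w g(2) MCRm by simp
    qed
  qed
  have R: "(\<exists>A\<in>sets M. {w \<in> space M. MCR_plus F D L fref eps > emp_MCR_plus F n L Z fref eps1 w + Q1} \<subseteq> A
                        \<and> measure M A \<le> delta)
          \<and> (\<exists>A\<in>sets M. {w \<in> space M. MCR_minus F D L fref eps < emp_MCR_minus F n L Z fref eps1 w - Q1} \<subseteq> A
                        \<and> measure M A \<le> delta)"
  proof
    show "\<exists>A\<in>sets M. {w \<in> space M. MCR_plus F D L fref eps > emp_MCR_plus F n L Z fref eps1 w + Q1} \<subseteq> A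
                        \<and> measure M A \<le> delta"
      using A1(1,2) P1 by blast
    show "\<exists>A\<in>sets M. {w \<in> space M. MCR_minus F D L fref eps < emp_MCR_minus F n L Z fref eps1 w - Q1} \<subseteq> A
                        \<and> measure M A \<le> delta"
      using A2(1,2) P2 by blast
  qed
  then show ?thesis unfolding Let_def eps1_def Q1_def .
qed

end
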